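(* (i) If $X=(X_1,\dots,X_n)$ is a $K^n$-valued $K$-Gaussian random variable, then $\{X_1,\dots,X_n\}$ is an orthogonal set in $\mathcal{L}^\infty(\mathbb{P})$ if and only if $X_1,\dots,X_n$ are independent. (ii) If $X_1,\dots,X_n$ are independent $K$-valued $K$-Gaussian random variables, then the random vector $(X_1,\dots,X_n)$ is $K$-Gaussian.
   Context: $K$ is a local field (locally compact, non-discrete, totally disconnected topological field) with its non-archimedean absolute value $|\cdot|$ ($|x|=0\iff x=0$, $|xy|=|x||y|$, $|x+y|\le|x|\vee|y|$). $K^n$ is the Banach space over $K$ with norm $|(x_1,\dots,x_n)|=|x_1|\vee\dots\vee|x_n|$. In a normed space $(E,\|\cdot\|)$ over $K$ (norm satisfying $\|x\|=0\iff x=0$, $\|\alpha x\|=|\alpha|\|x\|$, $\|x+y\|\le\|x\|\vee\|y\|$), a subset $F$ is orthogonal if $\|\sum_{i=1}^m\alpha_ix_i\|=\bigvee_{i=1}^m|\alpha_i|\|x_i\|$ for every finite $\{x_1,\dots,x_m\}\subset F$ and $\alpha_i\in K$; orthonormal if moreover each element has norm $1$. $\mathcal{L}^\infty(\mathbb{P})$ is the space of measurable $f:\Omega\to K$ with $\operatorname{ess\,sup}|f|<\infty$, modulo a.s. equality, normed by $\|f\|_\infty=\operatorname{ess\,sup}|f|$. For a separable Banach space $E$ over $K$, an $E$-valued random variable $X$ is $K$-Gaussian if whenever $X_1,X_2$ are independent copies of $X$ and $(\alpha_{11},\alpha_{12}),(\alpha_{21},\alpha_{22})$ is an orthonormal pair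 in $K^2$, $(\alpha_{11}X_1+\alpha_{12}X_2,\alpha_{21}X_1+\alpha_{22}X_2)$ has the same law as $(X_1,X_2)$. *)

theory Defs
  imports "HOL-Probability.Probability"
begin

text \<open>Total disconnectedness follows from the
  ultrametric inequality.\<close>
definition local_field_abs :: "('k::{field,metric_space} \<Rightarrow> real) \<Rightarrow> bool" where
  "local_field_abs av \<longleftrightarrow>
     (\<forall>x. av x = 0 \<longleftrightarrow> x = 0) \<and>
     (\<forall>x y. av (x * y) = av x * av y) \<and>
     (\<forall>x y. av (x + y) \<le> max (av x) (av y)) \<and>
     (\<forall>x y. dist x y = av (x - y)) \<and>
     (\<exists>x. x \<noteq> 0 \<and> av x \<noteq> 1) \<and>
     locally_compact_space (euclidean :: 'k topology)"

definition norm2 :: "('k \<Rightarrow> real) \<Rightarrow> 'k \<times> 'k \<Rightarrow> real" where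
  "norm2 av v = max (av (fst v)) (av (snd v))"

definition orthonormal_pair :: "('k::field \<Rightarrow> real) \<Rightarrow> 'k \<times> 'k \<Rightarrow> 'k \<times> 'k \<Rightarrow> bool" where
  "orthonormal_pair av u v \<longleftrightarrow>
     norm2 av u = 1 \<and> norm2 av v = 1 \<and>
     (\<forall>b1 b2. norm2 av (b1 * fst u + b2 * fst v, b1 * snd u + b2 * snd v)
               = max (av b1 * norm2 av u) (av b2 * norm2 av v))"

text \<open>If X1, X2 are independent copies of X
  with law mu, the law of (X1, X2) is mu \<otimes> mu, so the condition is stated on laws.\<close>
definition K_gaussian ::
  "('k::field \<Rightarrow> real) \<Rightarrow> ('k \<Rightarrow> 'e \<Rightarrow> 'e) \<Rightarrow> ('e \<Rightarrow> 'e \<Rightarrow> 'e) \<Rightarrow> 'e measure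
    \<Rightarrow> 'a measure \<Rightarrow> ('a \<Rightarrow> 'e) \<Rightarrow> bool" where
  "K_gaussian av scl add E M X \<longleftrightarrow>
     X \<in> measurable M E \<and>
     (\<forall>a11 a12 a21 a22. orthonormal_pair av (a11, a12) (a21, a22) \<longrightarrow>
        (let \<mu> = distr M E X in
          distr (\<mu> \<Otimes>\<^sub>M \<mu>) (E \<Otimes>\<^sub>M E)
            (\<lambda>(x1, x2). (add (scl a11 x1) (scl a12 x2), add (scl a21 x1) (scl a22 x2)))
          = \<mu> \<Otimes>\<^sub>M \<mu>))"

definition K_gaussian_scalar :: "('k::{field,metric_space} \<Rightarrow> real) \<Rightarrow> 'a measure \<Rightarrow> ('a \<Rightarrow> 'k) \<Rightarrow> bool" where
  "K_gaussian_scalar av M X \<longleftrightarrow> K_gaussian av (\<lambda>a x. a * x) (+) borel M X"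

definition K_gaussian_vec :: "('k::{field,metric_space} \<Rightarrow> real) \<Rightarrow> nat \<Rightarrow> 'a measure \<Rightarrow> ('a \<Rightarrow> (nat \<Rightarrow> 'k)) \<Rightarrow> bool" where
  "K_gaussian_vec av n M Y \<longleftrightarrow>
     K_gaussian av (\<lambda>a y. \<lambda>i\<in>{..<n}. a * y i) (\<lambda>y z. \<lambda>i\<in>{..<n}. y i + z i)
       (PiM {..<n} (\<lambda>_. borel)) M Y"

definition Linf_norm :: "('k \<Rightarrow> real) \<Rightarrow> 'a measure \<Rightarrow> ('a \<Rightarrow> 'k) \<Rightarrow> ereal" where
  "Linf_norm av M f = esssup M (\<lambda>\<omega>. ereal (av (f \<omega>)))"

definition Linf_orthogonal :: "('k::{field,metric_space} \<Rightarrow> real) \<Rightarrow> 'a measure \<Rightarrow> ('i \<Rightarrow> 'a \<Rightarrow> 'k) \<Rightarrow> 'i set \<Rightarrow> bool" where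
  "Linf_orthogonal av M X I \<longleftrightarrow>
     (\<forall>i\<in>I. X i \<in> borel_measurable M \<and> Linf_norm av M (X i) < \<infinity>) \<and>
     (\<forall>\<alpha>. Linf_norm av M (\<lambda>\<omega>. \<Sum>i\<in>I. \<alpha> i * X i \<omega>)
            = Max (insert 0 ((\<lambda>i. ereal (av (\<alpha> i)) * Linf_norm av M (X i)) ` I)))"

end

theory Submission
  imports Defs
begin


locale lfk =
  fixes av :: "'k::{field,metric_space} \<Rightarrow> real"
  assumes lf: "local_field_abs av"
begin

lemma av_zero_iff[simp]: "av x = 0 \<longleftrightarrow> x = 0"
  using lf unfolding local_field_abs_def by blast

lemma av_mult: "av (x * y) = av x * av y"
  using lf unfolding local_field_abs_def by blast

lemma av_ultra: "av (x + y) \<le> max (av x) (av y)"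
  using lf unfolding local_field_abs_def by blast

lemma dist_av: "dist x y = av (x - y)"
  using lf unfolding local_field_abs_def by blast

lemma av_nonneg[simp]: "0 \<le> av x"
  using dist_av[of x 0] by (metis diff_zero zero_le_dist)

lemma av_0[simp]: "av 0 = 0" by simp

lemma av_1[simp]: "av 1 = 1"
proof -
  have "av 1 = av 1 * av 1" using av_mult[of 1 1] by simp
  moreover have "av 1 \<noteq> 0" by simp
  ultimately show ?thesis by (metis mult_cancel_right1)
qed

lemma av_minus[simp]: "av (- x) = av x"
proof -
  have "av (-1) * av (-1) = 1" using av_mult[of "-1" "-1"] by simp
  then have "av (-1) = 1"
    by (metis av_nonneg abs_of_nonneg power2_eq_square real_sqrt_abs real_sqrt_one)
  then show ?thesis using av_mult[of "-1" x] by simp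
qed

lemma av_diff_commute: "av (x - y) = av (y - x)"
  by (metis av_minus minus_diff_eq)

lemma av_diff_ultra: "av (x - y) \<le> max (av x) (av y)"
  using av_ultra[of x "-y"] by simp

lemma av_pos[simp]: "0 < av x \<longleftrightarrow> x \<noteq> 0"
  using av_nonneg[of x] av_zero_iff[of x] by linarith

lemma av_strict: assumes "av x < av y" shows "av (x + y) = av y"
proof -
  have "av (x + y) \<le> av y" using av_ultra[of x y] assms by simp
  moreover have "av y \<le> max (av (x + y)) (av x)"
    using av_diff_ultra[of "x + y" x] by simp
  ultimately show ?thesis using assms by linarith
qed

lemma av_inverse: "av (inverse x) = inverse (av x)"
proof (cases "x = 0")
  case False
  then have "av x * av (inverse x) = 1" using av_mult[of x "inverse x"] by simp
  then show ?thesis using False by (simp add: inverse_eq_divide eq_divide_eq mult.commute)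
qed simp

lemma av_divide: "av (x / y) = av x / av y"
  by (simp add: divide_inverse av_mult av_inverse)

lemma av_power: "av (x ^ n) = av x ^ n"
  by (induction n) (simp_all add: av_mult)

lemma av_sum_le:
  assumes "finite F" "\<And>i. i \<in> F \<Longrightarrow> av (f i) \<le> c" "0 \<le> c"
  shows "av (\<Sum>i\<in>F. f i) \<le> c"
  using assms
proof (induction F rule: finite_induct)
  case (insert x F)
  have "av (f x) \<le> c" "av (sum f F) \<le> c" using insert by auto
  then show ?case using av_ultra[of "f x" "sum f F"] insert(1,2) by simp
qed simp

lemma av_sum_less:
  assumes "finite F" "\<And>i. i \<in> F \<Longrightarrow> av (f i) < c" "0 < c"
  shows "av (\<Sum>i\<in>F. f i) < c"
  using assms
proof (induction F rule: finite_induct)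
  case (insert x F)
  have "av (f x) < c" "av (sum f F) < c" using insert by auto
  then show ?case using av_ultra[of "f x" "sum f F"] insert(1,2) by simp
qed simp

lemma exists_small: "\<exists>p. 0 < av p \<and> av p < 1"
proof -
  obtain x where x: "x \<noteq> 0" "av x \<noteq> 1" using lf unfolding local_field_abs_def by blast
  show ?thesis
  proof (cases "av x < 1")
    case True then show ?thesis using x by auto
  next
    case False
    then have "av x > 1" using x by simp
    then show ?thesis using x by (intro exI[of _ "inverse x"]) (simp add: av_inverse inverse_less_1_iff)
  qed
qed

definition pi0 where "pi0 = (SOME p. 0 < av p \<and> av p < 1)"

lemma pi0: "0 < av pi0" "av pi0 < 1" "pi0 \<noteq> 0"
  using someI_ex[OF exists_small] unfolding pi0_def by auto

lemma pi0_pow_small: assumes "0 < e" shows "\<exists>k. av (pi0 ^ k) < e"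
  using real_arch_pow_inv[OF assms pi0(2)] by (simp add: av_power)

lemma compact_nbhd: "\<exists>\<delta> C. 0 < \<delta> \<and> compact C \<and> ball (0::'k) \<delta> \<subseteq> C"
proof -
  have "locally_compact_space (euclidean :: 'k topology)"
    using lf unfolding local_field_abs_def by blast
  then have "\<exists>U C. open U \<and> compact C \<and> (0::'k) \<in> U \<and> U \<subseteq> C"
    unfolding locally_compact_space_def by simp
  then obtain U C where "open U" "compact C" "(0::'k) \<in> U" "U \<subseteq> C" by blast
  then obtain e where "e > 0" "ball 0 e \<subseteq> U" using open_contains_ball by blast
  then show ?thesis using \<open>compact C\<close> \<open>U \<subseteq> C\<close> by blast
qed

lemma in_ball_av: "y \<in> ball x r \<longleftrightarrow> av (x - y) < r"
  by (simp add: dist_av)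

lemma finite_cover_C0: assumes "0 < r" "compact C0"
  shows "\<exists>T. T \<subseteq> C0 \<and> finite T \<and> C0 \<subseteq> (\<Union>y\<in>T. ball y r)"
proof -
  have "C0 \<subseteq> (\<Union>y\<in>C0. ball y r)" using assms by auto
  from compactE_image[OF assms(2) _ this] show ?thesis by (metis open_ball)
qed

lemma finite_vals: assumes "0 < a" shows "finite {av x | x. a \<le> av x \<and> av x \<le> b}"
proof -
  obtain del0 C0 where C0: "0 < del0" "compact C0" "ball (0::'k) del0 \<subseteq> C0" using compact_nbhd by blast
  obtain k where k: "av (pi0 ^ k) < del0 / (\<bar>b\<bar> + 1)"
    using pi0_pow_small[of "del0 / (\<bar>b\<bar> + 1)"] C0(1) by auto
  define w where "w = pi0 ^ k"
  have wpos: "0 < av w" unfolding w_def using pi0 by (simp add: av_power)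
  define a' where "a' = av w * a"
  have a'pos: "0 < a'" unfolding a'_def using wpos assms by simp
  obtain T where T: "T \<subseteq> C0" "finite T" "C0 \<subseteq> (\<Union>y\<in>T. ball y a')"
    using finite_cover_C0[OF a'pos C0(2)] by blast
  have "{av x | x. a \<le> av x \<and> av x \<le> b} \<subseteq> (\<lambda>y. av y / av w) ` T"
  proof
    fix v assume "v \<in> {av x | x. a \<le> av x \<and> av x \<le> b}"
    then obtain x where x: "v = av x" "a \<le> av x" "av x \<le> b" by auto
    have "av (w * x) = av w * av x" by (rule av_mult)
    also have "\<dots> \<le> av w * \<bar>b\<bar>" using x wpos by (intro mult_left_mono) auto
    also have "\<dots> < del0" using k wpos unfolding w_def
      by (smt (verit, del_insts) C0(1) divide_pos_pos mult_less_cancel_left_pos mult_nonneg_nonneg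
          nonzero_mult_div_cancel_right pos_less_divide_eq)
    finally have "w * x \<in> ball 0 del0" by (simp add: dist_av)
    then have "w * x \<in> C0" using C0(3) by auto
    then obtain y where y: "y \<in> T" "av (y - w * x) < a'" using T(3) by (auto simp: dist_av)
    have ge: "a' \<le> av (w * x)" unfolding a'_def av_mult using x wpos by simp
    have "av y = av ((y - w * x) + w * x)" by simp
    also have "\<dots> = av (w * x)" using y ge by (intro av_strict) simp
    finally have "av y / av w = av x" using wpos by (simp add: av_mult)
    then show "v \<in> (\<lambda>y. av y / av w) ` T" using y x by (metis image_eqI)
  qed
  then show ?thesis using T(2) finite_subset by blast
qed

lemma exists_dense: "\<exists>D. countable D \<and> (\<forall>x e. 0 < e \<longrightarrow> (\<exists>d\<in>D. av (x - d) < e))"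
proof -
  obtain del0 C0 where C0: "0 < del0" "compact C0" "ball (0::'k) del0 \<subseteq> C0" using compact_nbhd by blast
  have "\<forall>m::nat. \<exists>T. T \<subseteq> C0 \<and> finite T \<and> C0 \<subseteq> (\<Union>y\<in>T. ball y (1 / Suc m))"
    by (intro allI finite_cover_C0) (simp_all add: C0(2))
  then obtain T where T: "\<And>m::nat. T m \<subseteq> C0 \<and> finite (T m) \<and> C0 \<subseteq> (\<Union>y\<in>T m. ball y (1 / Suc m))"
    by metis
  define D where "D = (\<lambda>(d, k::nat). d / pi0 ^ k) ` ((\<Union>m. T m) \<times> UNIV)"
  have "countable D" unfolding D_def
    using T by (intro countable_image countable_SIGMA countable_UN) (auto intro: countable_finite)
  moreover have "\<exists>d\<in>D. av (x - d) < e" if e: "0 < e" for x e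
  proof -
    obtain k where k: "av (pi0 ^ k) < del0 / (av x + 1)"
      using pi0_pow_small[of "del0 / (av x + 1)"] C0(1) by (smt (verit) av_nonneg divide_pos_pos)
    define w where "w = pi0 ^ k"
    have wpos: "0 < av w" unfolding w_def using pi0 by (simp add: av_power)
    have "av (x * w) < del0"
    proof -
      have "av (x * w) = av x * av w" by (rule av_mult)
      also have "\<dots> \<le> (av x + 1) * av w" using wpos by (intro mult_right_mono) auto
      also have "\<dots> < del0" using k unfolding w_def
        by (smt (verit) av_nonneg mult.commute pos_less_divide_eq)
      finally show ?thesis .
    qed
    then have "x * w \<in> C0" using C0(3) by (auto simp: dist_av)
    obtain m :: nat where m: "1 / Suc m < e * av w"
      using wpos e by (metis mult_pos_pos nat_approx_posE)
    obtain y where y: "y \<in> T m" "av (y - x * w) < 1 / Suc m"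
      using T[of m] \<open>x * w \<in> C0\<close> by (auto simp: dist_av)
    have "y / w \<in> D" unfolding D_def w_def using y(1) by force
    have "x - y / w = (x * w - y) / w" using wpos by (simp add: field_simps)
    then have "av (x - y / w) = av (y - x * w) / av w" by (simp add: av_divide av_diff_commute)
    also have "\<dots> < e"
    proof -
      have "av (y - x * w) < e * av w" using y(2) m by linarith
      then show ?thesis using wpos by (simp add: pos_divide_less_eq)
    qed
    finally show ?thesis using \<open>y / w \<in> D\<close> by blast
  qed
  ultimately show ?thesis by blast
qed

definition Dn where "Dn = (SOME D. countable D \<and> (\<forall>x e. 0 < e \<longrightarrow> (\<exists>d\<in>D. av (x - d) < e)))"

lemma Dn: "countable Dn" "0 < e \<Longrightarrow> \<exists>d\<in>Dn. av (x - d) < e"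
  using someI_ex[OF exists_dense] unfolding Dn_def by blast+

end


context lfk begin

definition Bs :: "'k set set" where "Bs = (\<lambda>(d, m::nat). ball d (1 / Suc m)) ` (Dn \<times> UNIV)"

lemma countable_Bs: "countable Bs"
  unfolding Bs_def using Dn(1) by simp

lemma ball_sub: assumes "av (x - d) < r" "r \<le> e" shows "ball d r \<subseteq> ball x e"
proof
  fix y assume "y \<in> ball d r"
  then have "av (d - y) < r" by (simp add: dist_av)
  have "av (x - y) = av ((x - d) + (d - y))" by simp
  also have "\<dots> \<le> max (av (x - d)) (av (d - y))" by (rule av_ultra)
  also have "\<dots> < e" using assms \<open>av (d - y) < r\<close> by simp
  finally show "y \<in> ball x e" by (simp add: dist_av)
qed

lemma basis_Bs: "topological_basis Bs"
proof (subst topological_basis_iff)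
  show "open B'" if "B' \<in> Bs" for B' using that unfolding Bs_def by auto
  show "\<forall>O'. open O' \<longrightarrow> (\<forall>x\<in>O'. \<exists>B'\<in>Bs. x \<in> B' \<and> B' \<subseteq> O')"
  proof (intro allI impI ballI)
    fix O' :: "'k set" and x :: 'k assume "open O'" "x \<in> O'"
    then obtain e where e: "e > 0" "ball x e \<subseteq> O'" using open_contains_ball by blast
    obtain m :: nat where m: "1 / Suc m < e" using e nat_approx_posE by blast
    obtain d where d: "d \<in> Dn" "av (x - d) < 1 / Suc m" using Dn(2)[of "1 / Suc m" x] by auto
    have "x \<in> ball d (1 / Suc m)" using d by (simp add: dist_av av_diff_commute)
    moreover have "ball d (1 / Suc m) \<subseteq> O'" using ball_sub[OF d(2), of e] m e by auto
    moreover have "ball d (1 / Suc m) \<in> Bs" unfolding Bs_def using d by auto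
    ultimately show "\<exists>B'\<in>Bs. x \<in> B' \<and> B' \<subseteq> O'" by blast
  qed
qed

lemma borel_eq_Bs: "(borel :: 'k measure) = sigma UNIV Bs"
  by (rule borel_eq_countable_basis[OF countable_Bs basis_Bs])

lemma measurable_add_k[measurable (raw)]:
  fixes f g :: "'a \<Rightarrow> 'k"
  assumes f: "f \<in> borel_measurable N" and g: "g \<in> borel_measurable N"
  shows "(\<lambda>x. f x + g x) \<in> borel_measurable N"
proof -
  have "(\<lambda>x. f x + g x) \<in> measurable N (sigma UNIV Bs)"
  proof (rule measurable_measure_of)
    fix B assume "B \<in> Bs"
    then obtain c r where B: "B = ball c r" unfolding Bs_def by auto
    have "(\<lambda>x. f x + g x) -` B \<inter> space N =
      (\<Union>d\<in>Dn. (f -` ball d r \<inter> space N) \<inter> (g -` ball (c - d) r \<inter> space N))"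
    proof (intro set_eqI iffI)
      fix x assume x: "x \<in> (\<lambda>x. f x + g x) -` B \<inter> space N"
      then have r: "av (c - (f x + g x)) < r" by (simp add: B dist_av)
      then have "r > 0" by (metis av_nonneg le_less_trans)
      then obtain d where d: "d \<in> Dn" "av (f x - d) < r" using Dn(2) by blast
      have "av ((c - d) - g x) = av ((c - (f x + g x)) + (f x - d))" by (simp add: algebra_simps)
      also have "\<dots> \<le> max (av (c - (f x + g x))) (av (f x - d))" by (rule av_ultra)
      also have "\<dots> < r" using r d by simp
      finally show "x \<in> (\<Union>d\<in>Dn. (f -` ball d r \<inter> space N) \<inter> (g -` ball (c - d) r \<inter> space N))"
        using x d by (auto simp: dist_av av_diff_commute)
    next
      fix x assume "x \<in> (\<Union>d\<in>Dn. (f -` ball d r \<inter> space N) \<inter> (g -` ball (c - d) r \<inter> space N))"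
      then obtain d where d: "d \<in> Dn" "av (d - f x) < r" "av (c - d - g x) < r" "x \<in> space N"
        by (auto simp: dist_av)
      have "av (c - (f x + g x)) = av ((c - d - g x) + (d - f x))" by (simp add: algebra_simps)
      also have "\<dots> \<le> max (av (c - d - g x)) (av (d - f x))" by (rule av_ultra)
      also have "\<dots> < r" using d by simp
      finally show "x \<in> (\<lambda>x. f x + g x) -` B \<inter> space N" using d by (simp add: B dist_av)
    qed
    also have "\<dots> \<in> sets N"
      using f g Dn(1) by (intro sets.countable_UN'' Int) (auto intro: measurable_sets[OF _ borel_open])
    finally show "(\<lambda>x. f x + g x) -` B \<inter> space N \<in> sets N" .
  qed (auto simp: Bs_def)
  then show ?thesis by (simp add: borel_eq_Bs)
qed

lemma continuous_cmult_k: "continuous_on UNIV (\<lambda>y::'k. c * y)"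
  unfolding continuous_on_iff
proof (intro ballI allI impI)
  fix x :: 'k and e :: real assume "0 < e"
  show "\<exists>d>0. \<forall>x'\<in>UNIV. dist x' x < d \<longrightarrow> dist (c * x') (c * x) < e"
  proof (intro exI[of _ "e / (av c + 1)"] conjI ballI impI)
    show "0 < e / (av c + 1)" using \<open>0 < e\<close> by (simp add: add_nonneg_pos)
    fix x' :: 'k assume "dist x' x < e / (av c + 1)"
    then have h: "av (x' - x) * (av c + 1) < e" by (simp add: dist_av pos_less_divide_eq add_nonneg_pos)
    have "dist (c * x') (c * x) = av c * av (x' - x)" by (simp add: dist_av av_mult[symmetric] algebra_simps)
    also have "\<dots> \<le> av (x' - x) * (av c + 1)" by (simp add: algebra_simps)
    finally show "dist (c * x') (c * x) < e" using h by linarith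
  qed
qed

lemma measurable_cmult_k[measurable (raw)]:
  fixes f :: "'a \<Rightarrow> 'k"
  assumes f: "f \<in> borel_measurable N"
  shows "(\<lambda>x. c * f x) \<in> borel_measurable N"
  using measurable_compose[OF f borel_measurable_continuous_onI[OF continuous_cmult_k[of c]]]
  by (simp add: o_def)

lemma continuous_av: "continuous_on UNIV av"
proof -
  have "continuous_on UNIV (\<lambda>y::'k. dist y 0)" by (intro continuous_intros)
  moreover have "(\<lambda>y::'k. dist y 0) = av" by (simp add: dist_av fun_eq_iff)
  ultimately show ?thesis by metis
qed

lemma measurable_av[measurable (raw)]:
  fixes f :: "'a \<Rightarrow> 'k"
  assumes f: "f \<in> borel_measurable N"
  shows "(\<lambda>x. av (f x)) \<in> borel_measurable N"
  using measurable_compose[OF f borel_measurable_continuous_onI[OF continuous_av]]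
  by (simp add: o_def)

lemma measurable_sum_k[measurable (raw)]:
  fixes f :: "'i \<Rightarrow> 'a \<Rightarrow> 'k"
  assumes "\<And>i. i \<in> F \<Longrightarrow> f i \<in> borel_measurable N"
  shows "(\<lambda>x. \<Sum>i\<in>F. f i x) \<in> borel_measurable N"
proof (cases "finite F")
  case True
  then show ?thesis using assms
    by (induction F rule: finite_induct) (auto intro!: measurable_add_k)
qed simp

lemma measurable_minus_k[measurable (raw)]:
  fixes f g :: "'a \<Rightarrow> 'k"
  assumes f: "f \<in> borel_measurable N" and g: "g \<in> borel_measurable N"
  shows "(\<lambda>x. f x - g x) \<in> borel_measurable N"
proof -
  have "(\<lambda>x. f x + (-1) * g x) \<in> borel_measurable N"
    using f g by (intro measurable_add_k measurable_cmult_k)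
  then show ?thesis by simp
qed

end


context lfk begin

lemma orth_pair_shear: assumes "av a \<le> 1" shows "orthonormal_pair av (1, a) (0, 1)"
  unfolding orthonormal_pair_def norm2_def
proof (intro conjI allI)
  show "max (av (fst (1, a))) (av (snd (1, a))) = 1" using assms by simp
  show "max (av (fst (0::'k, 1::'k))) (av (snd (0::'k, 1::'k))) = 1" by simp
  fix b1 b2 :: 'k
  show "max (av (fst (b1 * fst (1, a) + b2 * fst (0, 1), b1 * snd (1, a) + b2 * snd (0, 1))))
      (av (snd (b1 * fst (1, a) + b2 * fst (0, 1), b1 * snd (1, a) + b2 * snd (0, 1)))) =
     max (av b1 * max (av (fst (1, a))) (av (snd (1, a))))
      (av b2 * max (av (fst (0::'k, 1::'k))) (av (snd (0::'k, 1::'k))))"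
  proof -
    have m1: "max (av 1) (av a) = 1" using assms by simp
    have le: "av (b1 * a) \<le> av b1" using assms by (simp add: av_mult mult_left_le)
    have "max (av b1) (av (b1 * a + b2)) = max (av b1) (av b2)"
    proof (cases "av b1 < av b2")
      case True
      then have "av (b1 * a + b2) = av b2" using le by (intro av_strict) simp
      then show ?thesis by simp
    next
      case False
      then have "av (b1 * a + b2) \<le> av b1" using le av_ultra[of "b1 * a" b2] by simp
      then show ?thesis using False by simp
    qed
    then show ?thesis using m1 by simp
  qed
qed

end

locale gvec = lfk av for av :: "'k::{field,metric_space} \<Rightarrow> real" +
  fixes N :: "nat set" and \<mu> :: "(nat \<Rightarrow> 'k) measure"
  assumes finN: "finite N"
    and prob: "prob_space \<mu>"
    and sets_mu: "sets \<mu> = sets (PiM N (\<lambda>_. borel :: 'k measure))"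
    and gauss: "\<And>a A. av a \<le> 1 \<Longrightarrow> A \<in> sets (PiM N (\<lambda>_. borel :: 'k measure)) \<Longrightarrow>
       emeasure \<mu> A = emeasure (\<mu> \<Otimes>\<^sub>M \<mu>) {p \<in> space (\<mu> \<Otimes>\<^sub>M \<mu>). (\<lambda>i\<in>N. fst p i + a * snd p i) \<in> A}"

context lfk begin

lemma measurable_vec_lin[measurable]:
  "(\<lambda>p. \<lambda>i\<in>N. b * fst p i + a * snd p i) \<in> measurable (PiM N (\<lambda>_. borel :: 'k measure) \<Otimes>\<^sub>M PiM N (\<lambda>_. borel)) (PiM N (\<lambda>_. borel))"
  by measurable

lemma gvec_of_K_gaussian_vec:
  assumes P: "prob_space M" and G: "K_gaussian_vec av n M Y"
  shows "gvec av {..<n} (distr M (PiM {..<n} (\<lambda>_. borel :: 'k measure)) Y)"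
proof -
  let ?E = "PiM {..<n} (\<lambda>_. borel :: 'k measure)"
  let ?\<mu> = "distr M ?E Y"
  have Y: "Y \<in> measurable M ?E" using G unfolding K_gaussian_vec_def K_gaussian_def by auto
  have G2: "\<And>a11 a12 a21 a22. orthonormal_pair av (a11, a12) (a21, a22) \<Longrightarrow>
      distr (?\<mu> \<Otimes>\<^sub>M ?\<mu>) (?E \<Otimes>\<^sub>M ?E)
        (\<lambda>(x1, x2). ((\<lambda>i\<in>{..<n}. (\<lambda>i\<in>{..<n}. a11 * x1 i) i + (\<lambda>i\<in>{..<n}. a12 * x2 i) i),
                     (\<lambda>i\<in>{..<n}. (\<lambda>i\<in>{..<n}. a21 * x1 i) i + (\<lambda>i\<in>{..<n}. a22 * x2 i) i)))
      = ?\<mu> \<Otimes>\<^sub>M ?\<mu>"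
    using G unfolding K_gaussian_vec_def K_gaussian_def Let_def by blast
  interpret pm: prob_space ?\<mu> using P Y by (simp add: prob_space.prob_space_distr)
  interpret pp: pair_prob_space ?\<mu> ?\<mu> by standard
  have sets_pp: "sets (?\<mu> \<Otimes>\<^sub>M ?\<mu>) = sets (?E \<Otimes>\<^sub>M ?E)"
    by (intro sets_pair_measure_cong) simp_all
  show ?thesis
  proof (intro gvec.intro[OF lfk_axioms] gvec_axioms.intro)
    show "finite {..<n}" by simp
    show "prob_space ?\<mu>" by (rule pm.prob_space_axioms)
    show "sets ?\<mu> = sets ?E" by simp
    fix a :: 'k and A assume a: "av a \<le> 1" and A: "A \<in> sets ?E"
    let ?F = "\<lambda>(x1, x2). ((\<lambda>i\<in>{..<n}. (\<lambda>i\<in>{..<n}. 1 * x1 i) i + (\<lambda>i\<in>{..<n}. a * x2 i) i),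
                     (\<lambda>i\<in>{..<n}. (\<lambda>i\<in>{..<n}. 0 * x1 i) i + (\<lambda>i\<in>{..<n}. 1 * x2 i) i))"
    have eq: "distr (?\<mu> \<Otimes>\<^sub>M ?\<mu>) (?E \<Otimes>\<^sub>M ?E) ?F = ?\<mu> \<Otimes>\<^sub>M ?\<mu>"
      using G2[OF orth_pair_shear[OF a]] .
    have Fm: "?F \<in> measurable (?\<mu> \<Otimes>\<^sub>M ?\<mu>) (?E \<Otimes>\<^sub>M ?E)"
    proof -
      have "?F = (\<lambda>p. ((\<lambda>i\<in>{..<n}. 1 * fst p i + a * snd p i), (\<lambda>i\<in>{..<n}. 0 * fst p i + 1 * snd p i)))"
        by (auto simp: fun_eq_iff restrict_def)
      moreover have "\<dots> \<in> measurable (?E \<Otimes>\<^sub>M ?E) (?E \<Otimes>\<^sub>M ?E)"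
        by (intro measurable_Pair measurable_vec_lin)
      ultimately show ?thesis using measurable_cong_sets[OF sets_pp refl] by simp
    qed
    have AE: "A \<times> space ?E \<in> sets (?E \<Otimes>\<^sub>M ?E)" using A by simp
    have "emeasure ?\<mu> A = emeasure (?\<mu> \<Otimes>\<^sub>M ?\<mu>) (A \<times> space ?E)"
      using A by (simp add: pm.emeasure_pair_measure_Times pm.emeasure_space_1[simplified])
    also have "\<dots> = emeasure (distr (?\<mu> \<Otimes>\<^sub>M ?\<mu>) (?E \<Otimes>\<^sub>M ?E) ?F) (A \<times> space ?E)"
      by (simp only: eq)
    also have "\<dots> = emeasure (?\<mu> \<Otimes>\<^sub>M ?\<mu>) (?F -` (A \<times> space ?E) \<inter> space (?\<mu> \<Otimes>\<^sub>M ?\<mu>))"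
      by (rule emeasure_distr[OF Fm AE])
    also have "?F -` (A \<times> space ?E) \<inter> space (?\<mu> \<Otimes>\<^sub>M ?\<mu>) =
       {p \<in> space (?\<mu> \<Otimes>\<^sub>M ?\<mu>). (\<lambda>i\<in>{..<n}. fst p i + a * snd p i) \<in> A}"
    proof -
      have "\<And>x1 x2. (\<lambda>i\<in>{..<n}. (\<lambda>i\<in>{..<n}. 1 * x1 i) i + (\<lambda>i\<in>{..<n}. a * x2 i) i) = (\<lambda>i\<in>{..<n}. x1 i + a * x2 i)"
        by (auto simp: fun_eq_iff restrict_def)
      then show ?thesis by (auto simp: space_pair_measure space_PiM)
    qed
    finally show "emeasure ?\<mu> A = emeasure (?\<mu> \<Otimes>\<^sub>M ?\<mu>) {p \<in> space (?\<mu> \<Otimes>\<^sub>M ?\<mu>). (\<lambda>i\<in>{..<n}. fst p i + a * snd p i) \<in> A}" .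
  qed
qed

end


sublocale gvec \<subseteq> mu: prob_space \<mu> by (rule prob)

lemma (in gvec) pp: "pair_prob_space \<mu> \<mu>"
  by (simp add: pair_prob_space_def pair_sigma_finite_def prob mu.sigma_finite_measure_axioms)

sublocale gvec \<subseteq> mm: pair_prob_space \<mu> \<mu> by (rule pp)

context gvec begin

lemma mm_prob: "prob_space (\<mu> \<Otimes>\<^sub>M \<mu>)"
  by (rule mm.prob_space_axioms)

lemma space_mu: "space \<mu> = PiE N (\<lambda>_. UNIV)"
  using sets_eq_imp_space_eq[OF sets_mu] by (simp add: space_PiM)

lemma sets_mm: "sets (\<mu> \<Otimes>\<^sub>M \<mu>) = sets (PiM N (\<lambda>_. borel :: 'k measure) \<Otimes>\<^sub>M PiM N (\<lambda>_. borel :: 'k measure))"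
  by (intro sets_pair_measure_cong sets_mu)

lemma space_mm: "space (\<mu> \<Otimes>\<^sub>M \<mu>) = PiE N (\<lambda>_. UNIV) \<times> PiE N (\<lambda>_. UNIV)"
  by (simp add: space_pair_measure space_mu)

lemma mm_times: "A \<in> sets \<mu> \<Longrightarrow> B \<in> sets \<mu> \<Longrightarrow> measure (\<mu> \<Otimes>\<^sub>M \<mu>) (A \<times> B) = measure \<mu> A * measure \<mu> B"
  by (simp add: measure_def mu.emeasure_pair_measure_Times enn2real_mult)

lemma gauss_measure:
  assumes "av a \<le> 1" "A \<in> sets \<mu>"
  shows "measure \<mu> A = measure (\<mu> \<Otimes>\<^sub>M \<mu>) {p \<in> space (\<mu> \<Otimes>\<^sub>M \<mu>). (\<lambda>i\<in>N. fst p i + a * snd p i) \<in> A}"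
  using gauss[OF assms(1)] assms(2) sets_mu by (simp add: measure_def)

lemma vec_meas: "(\<lambda>p. \<lambda>i\<in>N. fst p i + a * snd p i) \<in> measurable (\<mu> \<Otimes>\<^sub>M \<mu>) (PiM N (\<lambda>_. borel :: 'k measure))"
proof -
  have "(\<lambda>p. \<lambda>i\<in>N. 1 * fst p i + a * snd p i) \<in> measurable (PiM N (\<lambda>_. borel :: 'k measure) \<Otimes>\<^sub>M PiM N (\<lambda>_. borel :: 'k measure)) (PiM N (\<lambda>_. borel :: 'k measure))"
    by (rule measurable_vec_lin)
  then have "(\<lambda>p. \<lambda>i\<in>N. 1 * fst p i + a * snd p i) \<in> measurable (\<mu> \<Otimes>\<^sub>M \<mu>) (PiM N (\<lambda>_. borel :: 'k measure))"
    by (subst measurable_cong_sets[OF sets_mm refl])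
  then show ?thesis by simp
qed

lemma sets_vec_pre: "A \<in> sets \<mu> \<Longrightarrow> {p \<in> space (\<mu> \<Otimes>\<^sub>M \<mu>). (\<lambda>i\<in>N. fst p i + a * snd p i) \<in> A} \<in> sets (\<mu> \<Otimes>\<^sub>M \<mu>)"
  using measurable_sets[OF vec_meas, of A a] sets_mu by (simp add: Int_def conj_commute vimage_def)

lemma meas_coord: "i \<in> N \<Longrightarrow> (\<lambda>x. x i) \<in> borel_measurable \<mu>"
proof -
  assume i: "i \<in> N"
  have "(\<lambda>x. x i) \<in> measurable (PiM N (\<lambda>_. borel :: 'k measure)) borel"
    by (rule measurable_component_singleton[OF i])
  then show ?thesis by (subst measurable_cong_sets[OF sets_mu refl])
qed

lemma bounded_coord:
  assumes i: "i \<in> N"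
  shows "\<exists>R. AE x in \<mu>. av (x i) < R"
proof -
  define U where "U R = {x \<in> space \<mu>. R \<le> av (x i)}" for R :: real
  have Us: "U R \<in> sets \<mu>" for R
    unfolding U_def using meas_coord[OF i] by measurable
  have dich: "measure \<mu> (U R) = 0 \<or> measure \<mu> (U R) \<ge> 1/2" for R
  proof -
    let ?V = "space \<mu> - U R"
    have Vs: "?V \<in> sets \<mu>" using Us by auto
    let ?S = "{p \<in> space (\<mu> \<Otimes>\<^sub>M \<mu>). (\<lambda>i\<in>N. fst p i + 1 * snd p i) \<in> U R}"
    have "measure \<mu> (U R) = measure (\<mu> \<Otimes>\<^sub>M \<mu>) ?S"
      by (rule gauss_measure[OF _ Us]) simp
    also have "\<dots> \<ge> measure (\<mu> \<Otimes>\<^sub>M \<mu>) (U R \<times> ?V \<union> ?V \<times> U R)"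
    proof (intro mm.finite_measure_mono subsetI sets_vec_pre Us)
      fix p assume p: "p \<in> U R \<times> ?V \<union> ?V \<times> U R"
      then have sp: "p \<in> space (\<mu> \<Otimes>\<^sub>M \<mu>)" by (auto simp: U_def space_pair_measure)
      have "R \<le> av (fst p i + snd p i)"
      proof (cases "p \<in> U R \<times> ?V")
        case True
        then have "R \<le> av (fst p i)" "av (snd p i) < R" by (auto simp: U_def)
        then show ?thesis using av_strict[of "snd p i" "fst p i"] by (simp add: add.commute)
      next
        case False
        then have "R \<le> av (snd p i)" "av (fst p i) < R" using p by (auto simp: U_def)
        then show ?thesis using av_strict[of "fst p i" "snd p i"] by simp
      qed
      then show "p \<in> ?S" using sp i by (auto simp: U_def space_mm space_mu)
    qed
    also have "measure (\<mu> \<Otimes>\<^sub>M \<mu>) (U R \<times> ?V \<union> ?V \<times> U R) =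
        measure (\<mu> \<Otimes>\<^sub>M \<mu>) (U R \<times> ?V) + measure (\<mu> \<Otimes>\<^sub>M \<mu>) (?V \<times> U R)"
      using Us Vs by (intro mm.finite_measure_Union) auto
    also have "\<dots> = 2 * measure \<mu> (U R) * (1 - measure \<mu> (U R))"
      using Us Vs by (simp add: mm_times mu.prob_compl)
    finally have "2 * measure \<mu> (U R) * (1 - measure \<mu> (U R)) \<le> measure \<mu> (U R)" .
    show ?thesis
    proof (cases "measure \<mu> (U R) = 0")
      case False
      then have pos: "0 < measure \<mu> (U R)" by (simp add: zero_less_measure_iff)
      have "measure \<mu> (U R) * (2 * (1 - measure \<mu> (U R))) \<le> measure \<mu> (U R) * 1"
        using \<open>2 * measure \<mu> (U R) * (1 - measure \<mu> (U R)) \<le> measure \<mu> (U R)\<close> by (simp add: algebra_simps)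
      then have "2 * (1 - measure \<mu> (U R)) \<le> 1" using pos by (simp only: mult_le_cancel_left_pos)
      then show ?thesis by simp
    qed simp
  qed
  have "(\<lambda>k. measure \<mu> (U (real k))) \<longlonglongrightarrow> measure \<mu> (\<Inter>k. U (real k))"
  proof (rule mu.finite_Lim_measure_decseq)
    show "range (\<lambda>k. U (real k)) \<subseteq> sets \<mu>" using Us by auto
    show "decseq (\<lambda>k. U (real k))" unfolding decseq_def U_def by auto
  qed
  moreover have "(\<Inter>k. U (real k)) = {}"
  proof -
    have "\<not> (\<forall>k::nat. real k \<le> av (x i))" for x
      using reals_Archimedean2[of "av (x i)"] by (auto simp: not_le)
    then show ?thesis unfolding U_def by auto
  qed
  ultimately have "(\<lambda>k. measure \<mu> (U (real k))) \<longlonglongrightarrow> 0" by simp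
  then have "eventually (\<lambda>k. measure \<mu> (U (real k)) < 1/2) sequentially"
    by (rule order_tendstoD) simp
  then obtain k where "measure \<mu> (U (real k)) < 1/2"
    by (auto simp: eventually_sequentially)
  then have "measure \<mu> (U (real k)) = 0" using dich by fastforce
  then have "U (real k) \<in> null_sets \<mu>" using Us by (simp add: mu.emeasure_eq_measure null_sets_def)
  then have "AE x in \<mu>. x \<notin> U (real k)" by (rule AE_not_in)
  then have "AE x in \<mu>. av (x i) < real k" by (rule AE_mp) (auto simp: U_def intro!: AE_I2)
  then show ?thesis by blast
qed

end


locale gbox = gvec av N \<mu> for av :: "'k::{field,metric_space} \<Rightarrow> real" and N \<mu> +
  fixes \<rho> :: "nat \<Rightarrow> real"
  assumes rho_pos: "\<And>i. i \<in> N \<Longrightarrow> 0 < \<rho> i"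
begin

definition bx :: "(nat \<Rightarrow> 'k) \<Rightarrow> (nat \<Rightarrow> 'k) set" where
  "bx c = {x \<in> PiE N (\<lambda>_. UNIV). \<forall>i\<in>N. av (x i - c i) < \<rho> i}"

definition fb :: "(nat \<Rightarrow> 'k) \<Rightarrow> real" where "fb c = measure \<mu> (bx c)"

definition vsub :: "(nat \<Rightarrow> 'k) \<Rightarrow> (nat \<Rightarrow> 'k) \<Rightarrow> (nat \<Rightarrow> 'k)" where "vsub c d = (\<lambda>i\<in>N. c i - d i)"
definition vlin :: "(nat \<Rightarrow> 'k) \<Rightarrow> 'k \<Rightarrow> (nat \<Rightarrow> 'k) \<Rightarrow> (nat \<Rightarrow> 'k)" where "vlin c a d = (\<lambda>i\<in>N. c i + a * d i)"
definition Sset :: "(nat \<Rightarrow> 'k) set" where "Sset = {c \<in> PiE N (\<lambda>_. UNIV). 0 < fb c}"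
definition zv :: "nat \<Rightarrow> 'k" where "zv = (\<lambda>i\<in>N. 0)"

lemma vsub_PiE[simp]: "vsub c d \<in> PiE N (\<lambda>_. UNIV)" unfolding vsub_def by auto
lemma vlin_PiE[simp]: "vlin c a d \<in> PiE N (\<lambda>_. UNIV)" unfolding vlin_def by auto
lemma zv_PiE[simp]: "zv \<in> PiE N (\<lambda>_. UNIV)" unfolding zv_def by auto

lemma bx_eq_PiE: "bx c = PiE N (\<lambda>i. ball (c i) (\<rho> i))"
  unfolding bx_def by (auto simp: PiE_iff dist_av av_diff_commute extensional_def)

lemma bx_sets[measurable]: "bx c \<in> sets \<mu>"
  unfolding bx_eq_PiE sets_mu using finN by (intro sets_PiM_I_finite) auto

lemma bx_sub_space: "bx c \<subseteq> space \<mu>"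
  unfolding bx_def space_mu by auto

lemma bx_move: assumes "y \<in> bx c" shows "bx y = bx c"
proof -
  have y: "y \<in> PiE N (\<lambda>_. UNIV)" "\<And>i. i \<in> N \<Longrightarrow> av (y i - c i) < \<rho> i" using assms by (auto simp: bx_def)
  have "av (x i - c i) < \<rho> i" if "i \<in> N" "av (x i - y i) < \<rho> i" for x i
  proof -
    have le: "av (x i - c i) \<le> max (av (x i - y i)) (av (y i - c i))"
      using av_ultra[of "x i - y i" "y i - c i"] by simp
    have "max (av (x i - y i)) (av (y i - c i)) < \<rho> i" using that y(2)[OF that(1)] by simp
    then show ?thesis using le by linarith
  qed
  moreover have "av (x i - y i) < \<rho> i" if "i \<in> N" "av (x i - c i) < \<rho> i" for x i
  proof -
    have le: "av (x i - y i) \<le> max (av (x i - c i)) (av (y i - c i))"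
      using av_diff_ultra[of "x i - c i" "y i - c i"] by simp
    have "max (av (x i - c i)) (av (y i - c i)) < \<rho> i" using that y(2)[OF that(1)] by simp
    then show ?thesis using le by linarith
  qed
  ultimately show ?thesis unfolding bx_def by blast
qed

lemma bx_disj: assumes "bx c \<inter> bx d \<noteq> {}" shows "bx c = bx d"
proof -
  obtain z where "z \<in> bx c" "z \<in> bx d" using assms by blast
  then show ?thesis using bx_move by metis
qed

lemma bx_center: "c \<in> PiE N (\<lambda>_. UNIV) \<Longrightarrow> c \<in> bx c"
  unfolding bx_def using rho_pos by auto

lemma fb_nonneg[simp]: "0 \<le> fb c" unfolding fb_def by simp
lemma fb_le1: "fb c \<le> 1" unfolding fb_def by simp

definition Dvec where "Dvec = PiE N (\<lambda>_. Dn)"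

lemma countable_Dvec: "countable Dvec"
  unfolding Dvec_def using finN Dn(1) by (intro countable_PiE) auto

lemma cover: assumes "x \<in> PiE N (\<lambda>_. UNIV)" shows "\<exists>d\<in>Dvec. x \<in> bx d"
proof -
  define d where "d = (\<lambda>i\<in>N. SOME d. d \<in> Dn \<and> av (x i - d) < \<rho> i)"
  have "d i \<in> Dn \<and> av (x i - d i) < \<rho> i" if "i \<in> N" for i
  proof -
    have "\<exists>d. d \<in> Dn \<and> av (x i - d) < \<rho> i" using Dn(2)[OF rho_pos[OF that], of "x i"] by blast
    from someI_ex[OF this] show ?thesis unfolding d_def using that by simp
  qed
  then show ?thesis using assms unfolding Dvec_def bx_def by (intro bexI[of _ d]) (auto simp: d_def)
qed

lemma exists_pos: "\<exists>c\<in>PiE N (\<lambda>_. UNIV). 0 < fb c"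
proof (rule ccontr)
  assume neg: "\<not> (\<exists>c\<in>PiE N (\<lambda>_. UNIV). 0 < fb c)"
  have z: "fb d = 0" if "d \<in> Dvec" for d
  proof -
    have "d \<in> PiE N (\<lambda>_. UNIV)" using that unfolding Dvec_def by (auto simp: PiE_iff)
    then have "\<not> 0 < fb d" using neg by blast
    then show ?thesis using fb_nonneg[of d] by linarith
  qed
  have "(\<Union>d\<in>Dvec. bx d) \<in> null_sets \<mu>"
    using countable_Dvec by (intro null_sets_UN') (auto simp: null_sets_def mu.emeasure_eq_measure z[unfolded fb_def])
  moreover have "space \<mu> \<subseteq> (\<Union>d\<in>Dvec. bx d)"
  proof
    fix x assume "x \<in> space \<mu>"
    then obtain d where "d \<in> Dvec" "x \<in> bx d" using cover[of x] space_mu by auto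
    then show "x \<in> (\<Union>d\<in>Dvec. bx d)" by blast
  qed
  ultimately have "space \<mu> \<in> null_sets \<mu>" by (meson null_sets_subset sets.top)
  then show False by (simp add: mu.emeasure_space_1 null_sets_def)
qed

lemma finite_big: assumes "0 < \<delta>" shows "finite {bx c | c. c \<in> PiE N (\<lambda>_. UNIV) \<and> \<delta> \<le> fb c}"
proof (rule ccontr)
  let ?B = "{bx c | c. c \<in> PiE N (\<lambda>_. UNIV) \<and> \<delta> \<le> fb c}"
  assume "infinite ?B"
  obtain n :: nat where n: "1 < real n * \<delta>"
    using assms by (metis mult.commute reals_Archimedean3)
  obtain B where B: "finite B" "card B = n" "B \<subseteq> ?B" using infinite_arbitrarily_large[OF \<open>infinite ?B\<close>] by blast
  have Bs: "id ` B \<subseteq> sets \<mu>" using B(3) by auto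
  have disj: "disjoint_family_on id B"
    unfolding disjoint_family_on_def
  proof (intro ballI impI)
    fix m n assume mn: "m \<in> B" "n \<in> B" "m \<noteq> n"
    then obtain c d where "m = bx c" "n = bx d" using B(3) by blast
    then show "id m \<inter> id n = {}" using bx_disj mn(3) by auto
  qed
  have "measure \<mu> (\<Union>b\<in>B. id b) = (\<Sum>b\<in>B. measure \<mu> (id b))"
    by (rule mu.finite_measure_finite_Union[OF B(1) Bs disj])
  also have "\<dots> \<ge> real (card B) * \<delta>"
    using B(3) by (intro sum_bounded_below) (auto simp: fb_def)
  finally have "1 < measure \<mu> (\<Union>b\<in>B. id b)" using n B(2) by simp
  then show False by (metis mu.prob_le_1 not_le)
qed

lemma exists_max: "\<exists>g\<in>PiE N (\<lambda>_. UNIV). 0 < fb g \<and> (\<forall>c\<in>PiE N (\<lambda>_. UNIV). fb c \<le> fb g)"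
proof -
  obtain c0 where c0: "c0 \<in> PiE N (\<lambda>_. UNIV)" "0 < fb c0" using exists_pos by blast
  let ?B = "{bx c | c. c \<in> PiE N (\<lambda>_. UNIV) \<and> fb c0 \<le> fb c}"
  have fin: "finite (measure \<mu> ` ?B)" using finite_big[OF c0(2)] by simp
  have ne: "measure \<mu> ` ?B \<noteq> {}" using c0 by blast
  have "Max (measure \<mu> ` ?B) \<in> measure \<mu> ` ?B" by (rule Max_in[OF fin ne])
  then obtain b where b: "b \<in> ?B" "Max (measure \<mu> ` ?B) = measure \<mu> b"
    by (rule imageE)
  from b(1) obtain g where g: "b = bx g" "g \<in> PiE N (\<lambda>_. UNIV)" "fb c0 \<le> fb g" by blast
  have le: "fb c \<le> fb g" if c: "c \<in> PiE N (\<lambda>_. UNIV)" for c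
  proof (cases "fb c0 \<le> fb c")
    case True
    then have "measure \<mu> (bx c) \<in> measure \<mu> ` ?B" using c by blast
    then have "measure \<mu> (bx c) \<le> Max (measure \<mu> ` ?B)" by (rule Max_ge[OF fin])
    then have "fb c \<le> Max (measure \<mu> ` ?B)" by (simp only: fb_def)
    then show ?thesis using b g by (simp add: fb_def)
  next
    case False then show ?thesis using g by simp
  qed
  have "0 < fb g" using g(3) c0(2) by linarith
  then show ?thesis using g(2) le by blast
qed

lemma fb_vlin: assumes "av a \<le> 1" shows "fb c * fb d \<le> fb (vlin c a d)"
proof -
  let ?S = "{p \<in> space (\<mu> \<Otimes>\<^sub>M \<mu>). (\<lambda>i\<in>N. fst p i + a * snd p i) \<in> bx (vlin c a d)}"
  have "fb c * fb d = measure (\<mu> \<Otimes>\<^sub>M \<mu>) (bx c \<times> bx d)" by (simp add: mm_times fb_def)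
  also have "\<dots> \<le> measure (\<mu> \<Otimes>\<^sub>M \<mu>) ?S"
  proof (intro mm.finite_measure_mono subsetI sets_vec_pre bx_sets)
    fix p assume p: "p \<in> bx c \<times> bx d"
    then have "p \<in> space (\<mu> \<Otimes>\<^sub>M \<mu>)" using bx_sub_space by (auto simp: space_pair_measure)
    moreover have "av (fst p i + a * snd p i - vlin c a d i) < \<rho> i" if i: "i \<in> N" for i
    proof -
      have h: "av (fst p i - c i) < \<rho> i" "av (snd p i - d i) < \<rho> i" using p i by (auto simp: bx_def)
      have "av (fst p i + a * snd p i - vlin c a d i) = av ((fst p i - c i) + a * (snd p i - d i))"
        using i by (simp add: vlin_def algebra_simps)
      also have "\<dots> \<le> max (av (fst p i - c i)) (av a * av (snd p i - d i))"
        using av_ultra[of "fst p i - c i" "a * (snd p i - d i)"] by (simp add: av_mult)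
      also have "\<dots> < \<rho> i"
      proof -
        have "av a * av (snd p i - d i) \<le> av (snd p i - d i)"
          using assms by (simp add: mult_left_le_one_le)
        then show ?thesis using h by simp
      qed
      finally show ?thesis .
    qed
    ultimately show "p \<in> ?S" by (auto simp: bx_def)
  qed
  also have "\<dots> = fb (vlin c a d)" unfolding fb_def by (rule gauss_measure[OF assms bx_sets, symmetric])
  finally show ?thesis .
qed

lemma slice_eq: assumes "y \<in> space \<mu>"
  shows "(\<lambda>x. (x, y)) -` {p \<in> space (\<mu> \<Otimes>\<^sub>M \<mu>). (\<lambda>i\<in>N. fst p i + 1 * snd p i) \<in> bx g} = bx (vsub g y)"
  using assms by (auto simp: space_pair_measure bx_def vsub_def algebra_simps space_mu)

lemma conv: "ennreal (fb g) = (\<integral>\<^sup>+ y. ennreal (fb (vsub g y)) \<partial>\<mu>)"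
proof -
  let ?S = "{p \<in> space (\<mu> \<Otimes>\<^sub>M \<mu>). (\<lambda>i\<in>N. fst p i + 1 * snd p i) \<in> bx g}"
  have "ennreal (fb g) = emeasure \<mu> (bx g)" by (simp add: fb_def mu.emeasure_eq_measure)
  also have "\<dots> = emeasure (\<mu> \<Otimes>\<^sub>M \<mu>) ?S"
    using gauss[of 1 "bx g"] bx_sets sets_mu by simp
  also have "\<dots> = (\<integral>\<^sup>+ y. emeasure \<mu> ((\<lambda>x. (x, y)) -` ?S) \<partial>\<mu>)"
    by (rule mm.emeasure_pair_measure_alt2[OF sets_vec_pre[OF bx_sets]])
  also have "\<dots> = (\<integral>\<^sup>+ y. ennreal (fb (vsub g y)) \<partial>\<mu>)"
  proof (intro nn_integral_cong)
    fix y assume y: "y \<in> space \<mu>"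
    have "emeasure \<mu> ((\<lambda>x. (x, y)) -` ?S) = emeasure \<mu> (bx (vsub g y))"
      by (simp only: slice_eq[OF y])
    then show "emeasure \<mu> ((\<lambda>x. (x, y)) -` ?S) = ennreal (fb (vsub g y))"
      by (simp add: fb_def mu.emeasure_eq_measure)
  qed
  finally show ?thesis .
qed

lemma meas_fb_vsub: "(\<lambda>y. ennreal (fb (vsub g y))) \<in> borel_measurable \<mu>"
proof -
  let ?S = "{p \<in> space (\<mu> \<Otimes>\<^sub>M \<mu>). (\<lambda>i\<in>N. fst p i + 1 * snd p i) \<in> bx g}"
  have M: "(\<lambda>y. emeasure \<mu> ((\<lambda>x. (x, y)) -` ?S)) \<in> borel_measurable \<mu>"
    by (rule mm.measurable_emeasure_Pair2[OF sets_vec_pre[OF bx_sets]])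
  have eq: "emeasure \<mu> ((\<lambda>x. (x, y)) -` ?S) = ennreal (fb (vsub g y))" if y: "y \<in> space \<mu>" for y
  proof -
    have "emeasure \<mu> ((\<lambda>x. (x, y)) -` ?S) = emeasure \<mu> (bx (vsub g y))"
      by (simp only: slice_eq[OF y])
    then show ?thesis by (simp add: fb_def mu.emeasure_eq_measure)
  qed
  from measurable_cong[of \<mu> "\<lambda>y. emeasure \<mu> ((\<lambda>x. (x, y)) -` ?S)" "\<lambda>y. ennreal (fb (vsub g y))" borel, OF eq]
  show ?thesis using M by blast
qed

lemma ae_max:
  assumes g: "g \<in> PiE N (\<lambda>_. UNIV)" and max: "\<forall>c\<in>PiE N (\<lambda>_. UNIV). fb c \<le> fb g"
  shows "AE y in \<mu>. fb (vsub g y) = fb g"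
proof -
  let ?h = "\<lambda>y. ennreal (fb (vsub g y))"
  have hm: "?h \<in> borel_measurable \<mu>" by (rule meas_fb_vsub)
  have cm: "(\<lambda>y. ennreal (fb g)) \<in> borel_measurable \<mu>" by simp
  have int: "(\<integral>\<^sup>+ y. ?h y \<partial>\<mu>) = ennreal (fb g)" using conv[of g] by (rule sym)
  have fin: "(\<integral>\<^sup>+ y. ?h y \<partial>\<mu>) \<noteq> \<infinity>" unfolding int by simp
  have mono: "AE y in \<mu>. ?h y \<le> ennreal (fb g)"
  proof (rule AE_I2)
    fix y show "?h y \<le> ennreal (fb g)" using max vsub_PiE[of g y] by (intro ennreal_leI) blast
  qed
  have dm: "(\<lambda>y. ennreal (fb g) - ?h y) \<in> borel_measurable \<mu>"
    using hm by measurable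
  have "(\<integral>\<^sup>+ y. ennreal (fb g) - ?h y \<partial>\<mu>) = (\<integral>\<^sup>+ y. ennreal (fb g) \<partial>\<mu>) - (\<integral>\<^sup>+ y. ?h y \<partial>\<mu>)"
    by (rule nn_integral_diff[OF cm hm fin mono])
  also have "(\<integral>\<^sup>+ y. ennreal (fb g) \<partial>\<mu>) = ennreal (fb g)"
    using mu.emeasure_space_1 by (simp add: nn_integral_const)
  finally have "(\<integral>\<^sup>+ y. ennreal (fb g) - ?h y \<partial>\<mu>) = 0" unfolding int by simp
  then have "AE y in \<mu>. ennreal (fb g) - ?h y = 0"
    using nn_integral_0_iff_AE[OF dm] by blast
  then show ?thesis
  proof (rule eventually_mono)
    fix y assume "ennreal (fb g) - ?h y = 0"
    then have "ennreal (fb g) \<le> ?h y" by (rule ennreal_minus_eq_0)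
    then have "fb g \<le> fb (vsub g y)" by (simp add: ennreal_le_iff)
    then show "fb (vsub g y) = fb g" using max vsub_PiE[of g y] by (meson antisym)
  qed
qed

lemma pos_meas_exists:
  assumes "AE y in \<mu>. P y" "0 < fb d"
  shows "\<exists>y\<in>bx d. P y"
proof (rule ccontr)
  assume neg: "\<not> (\<exists>y\<in>bx d. P y)"
  from assms(1) obtain Z where Z: "{y \<in> space \<mu>. \<not> P y} \<subseteq> Z" "emeasure \<mu> Z = 0" "Z \<in> sets \<mu>"
    by (rule AE_E)
  have "bx d \<subseteq> Z" using neg Z(1) bx_sub_space by blast
  then have "measure \<mu> (bx d) \<le> measure \<mu> Z" using Z(3) by (intro mu.finite_measure_mono)
  also have "\<dots> = 0" using Z(2) by (simp add: mu.emeasure_eq_measure)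
  finally show False using assms(2) by (simp add: fb_def)
qed

lemma key_shift:
  assumes g: "g \<in> PiE N (\<lambda>_. UNIV)" and max: "\<forall>c\<in>PiE N (\<lambda>_. UNIV). fb c \<le> fb g"
    and d: "d \<in> Sset"
  shows "fb (vsub g d) = fb g"
proof -
  obtain y where y: "y \<in> bx d" "fb (vsub g y) = fb g"
    using pos_meas_exists[OF ae_max[OF g max]] d by (auto simp: Sset_def)
  have "vsub g y \<in> bx (vsub g d)"
    using y(1) by (auto simp: bx_def vsub_def av_diff_commute)
  then have "bx (vsub g y) = bx (vsub g d)" by (rule bx_move)
  then show ?thesis using y(2) by (simp add: fb_def)
qed

definition mval where "mval = (SOME m. \<exists>g\<in>PiE N (\<lambda>_. UNIV). m = fb g \<and> 0 < fb g \<and> (\<forall>c\<in>PiE N (\<lambda>_. UNIV). fb c \<le> fb g))"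

lemma mval: "0 < mval" "\<And>c. c \<in> PiE N (\<lambda>_. UNIV) \<Longrightarrow> fb c \<le> mval" "\<exists>g\<in>PiE N (\<lambda>_. UNIV). fb g = mval"
proof -
  have "\<exists>m. \<exists>g\<in>PiE N (\<lambda>_. UNIV). m = fb g \<and> 0 < fb g \<and> (\<forall>c\<in>PiE N (\<lambda>_. UNIV). fb c \<le> fb g)"
    using exists_max by blast
  from someI_ex[OF this] obtain g where g: "g \<in> PiE N (\<lambda>_. UNIV)" "mval = fb g" "0 < fb g" "\<forall>c\<in>PiE N (\<lambda>_. UNIV). fb c \<le> fb g"
    unfolding mval_def by blast
  then show "0 < mval" "\<And>c. c \<in> PiE N (\<lambda>_. UNIV) \<Longrightarrow> fb c \<le> mval" "\<exists>g\<in>PiE N (\<lambda>_. UNIV). fb g = mval"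
    by auto
qed

lemma key_shift_m: assumes "g \<in> PiE N (\<lambda>_. UNIV)" "fb g = mval" "d \<in> Sset" shows "fb (vsub g d) = mval"
  using key_shift[of g d] assms mval(2) by simp

lemma vsub_self: "vsub g g = zv" unfolding vsub_def zv_def by simp

lemma fb_zv: "fb zv = mval"
proof -
  obtain g where g: "g \<in> PiE N (\<lambda>_. UNIV)" "fb g = mval" using mval(3) by blast
  then have "g \<in> Sset" using mval(1) by (simp add: Sset_def)
  from key_shift_m[OF g this] show ?thesis by (simp add: vsub_self)
qed

lemma Sset_fb: assumes "d \<in> Sset" shows "fb d = mval"
proof -
  have d: "d \<in> PiE N (\<lambda>_. UNIV)" using assms by (simp add: Sset_def)
  have 1: "fb (vsub zv d) = mval" by (rule key_shift_m[OF zv_PiE fb_zv assms])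
  then have "vsub zv d \<in> Sset" using mval(1) by (simp add: Sset_def)
  from key_shift_m[OF zv_PiE fb_zv this] have "fb (vsub zv (vsub zv d)) = mval" .
  moreover have "vsub zv (vsub zv d) = d" using d by (auto simp: vsub_def zv_def fun_eq_iff PiE_def extensional_def)
  ultimately show ?thesis by simp
qed

lemma Sset_iff: "c \<in> Sset \<longleftrightarrow> c \<in> PiE N (\<lambda>_. UNIV) \<and> fb c = mval"
  using Sset_fb mval(1) by (auto simp: Sset_def)

lemma Sset_vlin: assumes "c \<in> Sset" "d \<in> Sset" "av a \<le> 1" shows "vlin c a d \<in> Sset"
proof -
  have "0 < fb c * fb d" using assms by (simp add: Sset_def)
  then show ?thesis using fb_vlin[OF assms(3), of c d] by (simp add: Sset_def)
qed

lemma zv_Sset: "zv \<in> Sset" using fb_zv mval(1) by (simp add: Sset_def)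

lemma small_Sset: assumes "l \<in> PiE N (\<lambda>_. UNIV)" "\<And>i. i \<in> N \<Longrightarrow> av (l i) < \<rho> i" shows "l \<in> Sset"
proof -
  have "l \<in> bx zv" using assms by (auto simp: bx_def zv_def)
  then have "bx l = bx zv" by (rule bx_move)
  then show ?thesis using assms fb_zv mval(1) by (simp add: Sset_def fb_def)
qed

lemma AE_Sset: "AE x in \<mu>. x \<in> Sset"
proof -
  have "{x \<in> space \<mu>. x \<notin> Sset} \<subseteq> (\<Union>d\<in>{d\<in>Dvec. fb d = 0}. bx d)"
  proof
    fix x assume x: "x \<in> {x \<in> space \<mu>. x \<notin> Sset}"
    then have xP: "x \<in> PiE N (\<lambda>_. UNIV)" using space_mu by auto
    then have "fb x = 0" using x fb_nonneg[of x] by (auto simp: Sset_def)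
    obtain d where d: "d \<in> Dvec" "x \<in> bx d" using cover[OF xP] by blast
    have "bx x = bx d" using d(2) by (rule bx_move)
    then show "x \<in> (\<Union>d\<in>{d\<in>Dvec. fb d = 0}. bx d)" using d \<open>fb x = 0\<close> by (auto simp: fb_def)
  qed
  moreover have "(\<Union>d\<in>{d\<in>Dvec. fb d = 0}. bx d) \<in> null_sets \<mu>"
    using countable_Dvec by (intro null_sets_UN') (auto simp: null_sets_def mu.emeasure_eq_measure fb_def)
  ultimately show ?thesis by (intro AE_I') auto
qed

lemma shift_inv: assumes "t \<in> Sset" "c \<in> PiE N (\<lambda>_. UNIV)" shows "fb (vsub c t) = fb c"
proof (cases "c \<in> Sset")
  case True
  have "vsub c t = vlin c (-1) t" by (simp add: vsub_def vlin_def)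
  then have "vsub c t \<in> Sset" using Sset_vlin[OF True assms(1), of "-1"] by simp
  then show ?thesis using True Sset_fb by simp
next
  case False
  have "vsub c t \<notin> Sset"
  proof
    assume "vsub c t \<in> Sset"
    then have "vlin (vsub c t) 1 t \<in> Sset" using Sset_vlin assms(1) by simp
    moreover have "vlin (vsub c t) 1 t = c" using assms(2)
      by (auto simp: vlin_def vsub_def fun_eq_iff PiE_def extensional_def)
    ultimately show False using False by simp
  qed
  then show ?thesis using False fb_nonneg[of c] fb_nonneg[of "vsub c t"] assms(2) by (auto simp: Sset_def)
qed

lemma Sset_bound:
  assumes ae: "AE x in \<mu>. \<forall>i\<in>N. av (x i) \<le> r i" and s: "s \<in> Sset" and i: "i \<in> N"
  shows "av (s i) \<le> r i \<or> av (s i) < \<rho> i"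
proof -
  obtain x where x: "x \<in> bx s" "\<forall>i\<in>N. av (x i) \<le> r i"
    using pos_meas_exists[OF ae, of s] s by (auto simp: Sset_def)
  have le: "av (s i) \<le> max (av (s i - x i)) (av (x i))" using av_ultra[of "s i - x i" "x i"] by simp
  have a: "av (s i - x i) < \<rho> i" using x(1) i by (auto simp: bx_def av_diff_commute)
  have b: "av (x i) \<le> r i" using x(2) i by blast
  show ?thesis using le a b by linarith
qed

end


context lfk begin

definition theta where
  "theta = Max {v \<in> {av x | x. av pi0 \<le> av x \<and> av x \<le> 1}. v < 1}"

lemma theta: "0 < theta" "theta < 1" "\<And>z w. av z < av w \<Longrightarrow> av z \<le> theta * av w"
proof -
  let ?V = "{v \<in> {av x | x. av pi0 \<le> av x \<and> av x \<le> 1}. v < 1}"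
  have fin: "finite ?V" using finite_vals[OF pi0(1), of 1] by simp
  have inV: "av pi0 \<in> ?V" using pi0 by auto
  then have ne: "?V \<noteq> {}" by blast
  have "theta \<in> ?V" unfolding theta_def using Max_in[OF fin ne] .
  then show "theta < 1" by simp
  have ge: "av pi0 \<le> theta" unfolding theta_def using Max_ge[OF fin inV] .
  then show "0 < theta" using pi0(1) by linarith
  fix z w assume zw: "av z < av w"
  then have w: "w \<noteq> 0" using av_nonneg[of z] by (metis av_0 less_le_trans order_less_irrefl)
  then have wpos: "0 < av w" by simp
  let ?q = "z / w"
  have q: "av ?q = av z / av w" by (rule av_divide)
  have q1: "av ?q < 1" using zw wpos by (simp add: q)
  have "av ?q \<le> theta"
  proof (cases "av pi0 \<le> av ?q")
    case True
    then have "av ?q \<in> ?V" using q1 by auto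
    then show ?thesis unfolding theta_def using Max_ge[OF fin] by blast
  next
    case False then show ?thesis using ge by linarith
  qed
  then have "av ?q * av w \<le> theta * av w" using wpos by (intro mult_right_mono) auto
  then show "av z \<le> theta * av w" using q wpos by simp
qed

lemma lin_sum_closed:
  fixes S :: "(nat \<Rightarrow> 'k) set"
  assumes lin: "\<And>c d a. c \<in> S \<Longrightarrow> d \<in> S \<Longrightarrow> av a \<le> 1 \<Longrightarrow> (\<lambda>i\<in>N. c i + a * d i) \<in> S"
    and zero: "(\<lambda>i\<in>N. 0) \<in> S"
    and fin: "finite A" and W: "\<And>i. i \<in> A \<Longrightarrow> W i \<in> S" and a: "\<And>i. i \<in> A \<Longrightarrow> av (a i) \<le> 1"
  shows "(\<lambda>k\<in>N. \<Sum>i\<in>A. a i * W i k) \<in> S"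
  using fin W a
proof (induction A rule: finite_induct)
  case empty then show ?case using zero by (simp only: sum.empty)
next
  case (insert x F)
  have c: "(\<lambda>k\<in>N. \<Sum>i\<in>F. a i * W i k) \<in> S" using insert by (simp add: restrict_def)
  have "(\<lambda>i\<in>N. (\<lambda>k\<in>N. \<Sum>i\<in>F. a i * W i k) i + a x * W x i) \<in> S"
    using lin[OF c insert.prems(1)[of x] insert.prems(2)[of x]] by simp
  moreover have "(\<lambda>i\<in>N. (\<lambda>k\<in>N. \<Sum>i\<in>F. a i * W i k) i + a x * W x i) = (\<lambda>k\<in>N. \<Sum>i\<in>insert x F. a i * W i k)"
    using insert(1,2) by (auto simp: fun_eq_iff add.commute)
  ultimately show ?case by (metis (no_types))
qed

lemma lattice_lemma:
  fixes S :: "(nat \<Rightarrow> 'k) set" and N :: "nat set" and r \<rho> :: "nat \<Rightarrow> real" and \<epsilon> :: real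
  assumes finN: "finite N"
    and lin: "\<And>c d a. c \<in> S \<Longrightarrow> d \<in> S \<Longrightarrow> av a \<le> 1 \<Longrightarrow> (\<lambda>i\<in>N. c i + a * d i) \<in> S"
    and zero: "(\<lambda>i\<in>N. 0) \<in> S"
    and small: "\<And>l. l \<in> PiE N (\<lambda>_. UNIV) \<Longrightarrow> (\<And>i. i \<in> N \<Longrightarrow> av (l i) < \<rho> i) \<Longrightarrow> l \<in> S"
    and bound: "\<And>s i. s \<in> S \<Longrightarrow> i \<in> N \<Longrightarrow> av (s i) \<le> r i \<or> av (s i) < \<rho> i"
    and rnn: "\<And>i. i \<in> N \<Longrightarrow> 0 \<le> r i"
    and rval: "\<And>i. i \<in> N \<Longrightarrow> r i \<in> range av"
    and rho: "\<And>i. i \<in> N \<Longrightarrow> \<rho> i = \<epsilon> * (if 0 < r i then r i else 1)"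
    and eps: "0 < \<epsilon>" "\<epsilon> \<le> theta"
    and orth: "\<And>\<alpha>. (\<forall>s\<in>S. av (\<Sum>i\<in>N. \<alpha> i * s i) \<le> theta * Max (insert 0 ((\<lambda>i. av (\<alpha> i) * r i) ` N)))
                 \<Longrightarrow> Max (insert 0 ((\<lambda>i. av (\<alpha> i) * r i) ` N)) = 0"
  shows "I \<subseteq> N \<Longrightarrow> j \<in> I \<Longrightarrow> av y \<le> r j \<Longrightarrow> \<exists>w\<in>S. w j = y \<and> (\<forall>k\<in>I-{j}. w k = 0)"
proof (induction "card I" arbitrary: I j y rule: less_induct)
  case less
  note IH = less.hyps
  have IN: "I \<subseteq> N" and jI: "j \<in> I" and yb: "av y \<le> r j" using less.prems by auto
  have jN: "j \<in> N" using IN jI by auto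
  have rhopos: "0 < \<rho> i" if "i \<in> N" for i using rho[OF that] eps(1) by simp
  have th: "0 < theta" "theta < 1" using theta(1,2) by auto
  have zero_ok: "\<exists>w\<in>S. w j = 0 \<and> (\<forall>k\<in>I-{j}. w k = 0)"
    using zero jN IN by (intro bexI[of _ "\<lambda>i\<in>N. 0"]) auto
  show ?case
  proof (cases "r j = 0")
    case True
    then have "y = 0" using yb av_nonneg[of y] by simp
    then show ?thesis using zero_ok by simp
  next
    case False
    then have rjpos: "0 < r j" using rnn[OF jN] by simp
    show ?thesis
    proof (rule ccontr)
      assume neg: "\<not> (\<exists>w\<in>S. w j = y \<and> (\<forall>k\<in>I-{j}. w k = 0))"
      define I' where "I' = I - {j}"
      have finI: "finite I" using IN finN finite_subset by blast
      have cardI': "card I' < card I" unfolding I'_def using finI jI by (rule card_Diff1_less)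
      have I'N: "I' \<subseteq> N" unfolding I'_def using IN by auto
      define P where "P = {i \<in> I'. 0 < r i}"
      have PN: "P \<subseteq> N" unfolding P_def using I'N by auto
      have finP: "finite P" using PN finN finite_subset by blast
      have jP: "j \<notin> P" unfolding P_def I'_def by auto
      define X where "X i = (SOME x. av x = r i)" for i
      have X: "av (X i) = r i" if "i \<in> P" for i
      proof -
        have "i \<in> N" using that PN by auto
        then have "r i \<in> range av" by (rule rval)
        then have "\<exists>x. av x = r i" by (metis rangeE)
        then show ?thesis unfolding X_def by (rule someI_ex)
      qed
      have Xnz: "X i \<noteq> 0" if "i \<in> P" for i using X[OF that] that by (auto simp: P_def)
      define W where "W i = (SOME w. w \<in> S \<and> w i = X i \<and> (\<forall>k\<in>I'-{i}. w k = 0))" for i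
      have W: "W i \<in> S \<and> W i i = X i \<and> (\<forall>k\<in>I'-{i}. W i k = 0)" if iP: "i \<in> P" for i
      proof -
        have "i \<in> I'" using iP by (simp add: P_def)
        have "\<exists>w\<in>S. w i = X i \<and> (\<forall>k\<in>I'-{i}. w k = 0)"
          using IH[OF cardI' I'N \<open>i \<in> I'\<close>, of "X i"] X[OF iP] by simp
        then have "\<exists>w. w \<in> S \<and> w i = X i \<and> (\<forall>k\<in>I'-{i}. w k = 0)" by blast
        then show ?thesis unfolding W_def by (rule someI_ex)
      qed
      define c where "c i = W i j" for i
      have cb: "av (c i) \<le> r j" if iP: "i \<in> P" for i
      proof -
        have "av (c i) \<le> r j \<or> av (c i) < \<rho> j" unfolding c_def using bound[OF conjunct1[OF W[OF iP]] jN] .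
        moreover have "\<rho> j \<le> r j" using rho[OF jN] rjpos eps th by (simp add: mult_le_cancel_right1)
        ultimately show ?thesis by linarith
      qed
      define \<alpha> where "\<alpha> k = (if k = j then 1 else if k \<in> P then - (c k / X k) else 0)" for k
      define M where "M = Max (insert 0 ((\<lambda>i. av (\<alpha> i) * r i) ` N))"
      have Mge: "r j \<le> M"
      proof -
        have "av (\<alpha> j) * r j \<in> insert 0 ((\<lambda>i. av (\<alpha> i) * r i) ` N)" using jN by blast
        then have "av (\<alpha> j) * r j \<le> M" unfolding M_def using finN by (intro Max_ge) auto
        then show ?thesis by (simp add: \<alpha>_def)
      qed
      have key: "\<forall>s\<in>S. av (\<Sum>i\<in>N. \<alpha> i * s i) \<le> theta * M"
      proof
        fix s assume s: "s \<in> S"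
        define A where "A = {i \<in> P. av (s i) \<le> r i}"
        have AP: "A \<subseteq> P" unfolding A_def by auto
        have finA: "finite A" using AP finP finite_subset by blast
        define v where "v = (\<lambda>k\<in>N. \<Sum>i\<in>A. (- (s i / X i)) * W i k)"
        have v: "v \<in> S" unfolding v_def
        proof (rule lin_sum_closed[OF lin zero finA])
          fix i assume iA: "i \<in> A"
          then have iP: "i \<in> P" using AP by auto
          show "W i \<in> S" using W[OF iP] by simp
          have "av (- (s i / X i)) = av (s i) / r i" using X[OF iP] by (simp add: av_divide)
          also have "\<dots> \<le> 1" using iA iP by (auto simp: A_def P_def)
          finally show "av (- (s i / X i)) \<le> 1" .
        qed
        define u where "u = (\<lambda>k\<in>N. s k + 1 * v k)"
        have u: "u \<in> S" unfolding u_def using lin[OF s v, of 1] by simp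
        have uI': "u k = (if k \<in> A then 0 else s k)" if kI': "k \<in> I'" for k
        proof -
          have kN: "k \<in> N" using kI' I'N by auto
          have "(\<Sum>i\<in>A. (- (s i / X i)) * W i k) = (\<Sum>i\<in>A. if i = k then (- (s k / X k)) * X k else 0)"
          proof (rule sum.cong[OF refl])
            fix i assume iA: "i \<in> A"
            then have iP: "i \<in> P" using AP by auto
            show "(- (s i / X i)) * W i k = (if i = k then (- (s k / X k)) * X k else 0)"
            proof (cases "i = k")
              case True then show ?thesis using W[OF iP] by simp
            next
              case False
              then have "W i k = 0" using W[OF iP] kI' by auto
              then show ?thesis using False by simp
            qed
          qed
          also have "\<dots> = (if k \<in> A then (- (s k / X k)) * X k else 0)"
            using finA by (simp add: sum.delta)
          finally have "v k = (if k \<in> A then (- (s k / X k)) * X k else 0)" using kN by (simp add: v_def)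
          moreover have "k \<in> A \<Longrightarrow> (- (s k / X k)) * X k = - s k" using Xnz AP by auto
          ultimately show ?thesis using kN by (auto simp: u_def)
        qed
        have uj: "u j = s j + (\<Sum>i\<in>A. (- (s i / X i)) * c i)" using jN by (simp add: u_def v_def c_def)
        define l where "l = (\<lambda>k\<in>N. if k \<in> I' then u k else 0)"
        have l: "l \<in> S"
        proof (rule small)
          show "l \<in> PiE N (\<lambda>_. UNIV)" unfolding l_def by auto
          fix k assume kN: "k \<in> N"
          show "av (l k) < \<rho> k"
          proof (cases "k \<in> I'")
            case True
            show ?thesis
            proof (cases "k \<in> A")
              case True then show ?thesis using \<open>k \<in> I'\<close> kN uI' rhopos[OF kN] by (simp add: l_def)
            next
              case False
              have "av (s k) < \<rho> k"
              proof (cases "k \<in> P")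
                case True
                then have "\<not> av (s k) \<le> r k" using False by (simp add: A_def)
                then show ?thesis using bound[OF s kN] by auto
              next
                case False
                then have "r k = 0" using \<open>k \<in> I'\<close> rnn[OF kN] by (auto simp: P_def)
                then show ?thesis using bound[OF s kN] rhopos[OF kN] by auto
              qed
              then show ?thesis using \<open>k \<in> I'\<close> \<open>k \<notin> A\<close> kN uI' by (simp add: l_def)
            qed
          next
            case False then show ?thesis using kN rhopos[OF kN] by (simp add: l_def)
          qed
        qed
        define w where "w = (\<lambda>i\<in>N. u i + (-1) * l i)"
        have w: "w \<in> S" unfolding w_def using lin[OF u l, of "-1"] by simp
        have wI': "w k = 0" if "k \<in> I'" for k using that I'N by (auto simp: w_def l_def)
        have wj: "w j = u j" using jN by (simp add: w_def l_def I'_def)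
        have ujy: "av (u j) < av y"
        proof (rule ccontr)
          assume "\<not> av (u j) < av y"
          then have ge: "av y \<le> av (u j)" by simp
          show False
          proof (cases "u j = 0")
            case True
            then have "y = 0" using ge av_nonneg[of y] by simp
            then show False using neg zero_ok by simp
          next
            case False
            define a where "a = y / u j"
            have a: "av a \<le> 1" unfolding a_def using False ge by (simp add: av_divide divide_le_eq_1)
            have w': "(\<lambda>i\<in>N. (\<lambda>i\<in>N. 0) i + a * w i) \<in> S" by (rule lin[OF zero w a])
            have "(\<lambda>i\<in>N. (\<lambda>i\<in>N. 0) i + a * w i) j = y" using jN wj False by (simp add: a_def)
            moreover have "\<forall>k\<in>I-{j}. (\<lambda>i\<in>N. (\<lambda>i\<in>N. 0) i + a * w i) k = 0" using wI' IN by (auto simp: I'_def)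
            ultimately show False using neg w' by blast
          qed
        qed
        have ujb: "av (u j) \<le> theta * r j"
        proof -
          have "av (u j) \<le> theta * av y" by (rule theta(3)[OF ujy])
          also have "\<dots> \<le> theta * r j" using yb th by (intro mult_left_mono) auto
          finally show ?thesis .
        qed
        have sum1: "(\<Sum>i\<in>N. \<alpha> i * s i) = s j + (\<Sum>k\<in>P. (- (c k / X k)) * s k)"
        proof -
          have "(\<Sum>i\<in>N. \<alpha> i * s i) = (\<Sum>i\<in>N. (if i = j then s i else 0) + (if i \<in> P then (- (c i / X i)) * s i else 0))"
            by (rule sum.cong[OF refl]) (use jP in \<open>auto simp: \<alpha>_def\<close>)
          also have "\<dots> = (\<Sum>i\<in>N. (if i = j then s i else 0)) + (\<Sum>i\<in>N. (if i \<in> P then (- (c i / X i)) * s i else 0))"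
            by (rule sum.distrib)
          also have "(\<Sum>i\<in>N. (if i = j then s i else 0)) = s j"
            using finN jN by (simp add: sum.delta)
          also have "(\<Sum>i\<in>N. (if i \<in> P then (- (c i / X i)) * s i else 0)) = (\<Sum>k\<in>N \<inter> P. (- (c k / X k)) * s k)"
            by (rule sum.inter_restrict[OF finN, symmetric])
          also have "N \<inter> P = P" using PN by auto
          finally show ?thesis .
        qed
        have sum2: "(\<Sum>k\<in>P. (- (c k / X k)) * s k) = (\<Sum>k\<in>P-A. (- (c k / X k)) * s k) + (\<Sum>k\<in>A. (- (s k / X k)) * c k)"
        proof -
          have "(\<Sum>k\<in>P. (- (c k / X k)) * s k) = (\<Sum>k\<in>P-A. (- (c k / X k)) * s k) + (\<Sum>k\<in>A. (- (c k / X k)) * s k)"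
            using AP finP by (rule sum.subset_diff)
          also have "(\<Sum>k\<in>A. (- (c k / X k)) * s k) = (\<Sum>k\<in>A. (- (s k / X k)) * c k)"
            by (rule sum.cong[OF refl]) (simp add: field_simps)
          finally show ?thesis .
        qed
        have split: "(\<Sum>i\<in>N. \<alpha> i * s i) = u j + (\<Sum>k\<in>P-A. (- (c k / X k)) * s k)"
          using sum1 sum2 uj by (simp add: algebra_simps)
        have rest: "av (\<Sum>k\<in>P-A. (- (c k / X k)) * s k) \<le> theta * r j"
        proof (rule av_sum_le)
          show "finite (P - A)" using finP by simp
          show "0 \<le> theta * r j" using th rjpos by simp
          fix k assume k: "k \<in> P - A"
          then have kP: "k \<in> P" and kN: "k \<in> N" using PN by auto
          have rk: "0 < r k" using kP by (simp add: P_def)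
          have "\<not> av (s k) \<le> r k" using k by (simp add: A_def)
          then have sk: "av (s k) < \<epsilon> * r k" using bound[OF s kN] rho[OF kN] rk by auto
          have "av ((- (c k / X k)) * s k) = av (c k) * (av (s k) / r k)"
            using X[OF kP] by (simp add: av_mult av_divide)
          also have "\<dots> \<le> r j * \<epsilon>"
          proof (rule mult_mono)
            show "av (c k) \<le> r j" by (rule cb[OF kP])
            show "av (s k) / r k \<le> \<epsilon>" using sk rk by (simp add: divide_le_eq mult.commute)
          qed (use rjpos rk in auto)
          also have "\<dots> \<le> theta * r j" using eps rjpos by (simp add: mult.commute)
          finally show "av ((- (c k / X k)) * s k) \<le> theta * r j" .
        qed
        have "av (\<Sum>i\<in>N. \<alpha> i * s i) \<le> max (av (u j)) (av (\<Sum>k\<in>P-A. (- (c k / X k)) * s k))"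
          unfolding split by (rule av_ultra)
        also have "\<dots> \<le> theta * r j" using ujb rest by simp
        also have "\<dots> \<le> theta * M" using Mge th by (intro mult_left_mono) auto
        finally show "av (\<Sum>i\<in>N. \<alpha> i * s i) \<le> theta * M" .
      qed
      have "M = 0" using orth[of \<alpha>] key unfolding M_def by blast
      then show False using Mge rjpos by simp
    qed
  qed
qed

end


locale gorth = gvec av N \<mu> for av :: "'k::{field,metric_space} \<Rightarrow> real" and N \<mu> +
  fixes r :: "nat \<Rightarrow> real"
  assumes r_nn: "\<And>i. i \<in> N \<Longrightarrow> 0 \<le> r i"
    and r_val: "\<And>i. i \<in> N \<Longrightarrow> r i \<in> range av"
    and r_ae: "AE x in \<mu>. \<forall>i\<in>N. av (x i) \<le> r i"
    and r_orth: "\<And>\<alpha>. (AE x in \<mu>. av (\<Sum>i\<in>N. \<alpha> i * x i) \<le> theta * Max (insert 0 ((\<lambda>i. av (\<alpha> i) * r i) ` N)))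
                 \<Longrightarrow> Max (insert 0 ((\<lambda>i. av (\<alpha> i) * r i) ` N)) = 0"
begin

definition RR where "RR i = (if 0 < r i then r i else 1)"
definition boxe where "boxe \<epsilon> c = {x \<in> PiE N (\<lambda>_. UNIV). \<forall>i\<in>N. av (x i - c i) < \<epsilon> * RR i}"

lemma RR_pos: "0 < RR i" unfolding RR_def by simp

lemma gbox_e: "0 < \<epsilon> \<Longrightarrow> gbox av N \<mu> (\<lambda>i. \<epsilon> * RR i)"
  by (intro gbox.intro gvec.intro lfk_axioms gvec_axioms gbox_axioms.intro) (simp add: RR_pos)

lemma boxe_sets: "0 < \<epsilon> \<Longrightarrow> boxe \<epsilon> c \<in> sets \<mu>"
proof -
  assume e: "0 < \<epsilon>"
  interpret g: gbox av N \<mu> "\<lambda>i. \<epsilon> * RR i" by (rule gbox_e[OF e])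
  show ?thesis using g.bx_sets unfolding g.bx_def boxe_def .
qed

lemma boxe_move: "0 < \<epsilon> \<Longrightarrow> y \<in> boxe \<epsilon> c \<Longrightarrow> boxe \<epsilon> y = boxe \<epsilon> c"
proof -
  assume e: "0 < \<epsilon>" and y: "y \<in> boxe \<epsilon> c"
  interpret g: gbox av N \<mu> "\<lambda>i. \<epsilon> * RR i" by (rule gbox_e[OF e])
  show ?thesis using g.bx_move[of y c] y unfolding g.bx_def boxe_def by simp
qed

lemma boxe_mono: "\<epsilon> \<le> \<epsilon>' \<Longrightarrow> boxe \<epsilon> c \<subseteq> boxe \<epsilon>' c"
proof
  fix x assume le: "\<epsilon> \<le> \<epsilon>'" and x: "x \<in> boxe \<epsilon> c"
  have "\<epsilon> * RR i \<le> \<epsilon>' * RR i" for i using le RR_pos[of i] by (simp add: mult_right_mono)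
  then show "x \<in> boxe \<epsilon>' c" using x unfolding boxe_def by (auto intro: less_le_trans)
qed

lemma box_shift:
  assumes e: "0 < \<epsilon>" "\<epsilon> \<le> theta" and t: "t \<in> PiE N (\<lambda>_. UNIV)" "\<forall>i\<in>N. av (t i) \<le> r i"
    and c: "c \<in> PiE N (\<lambda>_. UNIV)"
  shows "measure \<mu> (boxe \<epsilon> (\<lambda>i\<in>N. c i - t i)) = measure \<mu> (boxe \<epsilon> c)"
proof -
  interpret g: gbox av N \<mu> "\<lambda>i. \<epsilon> * RR i" by (rule gbox_e[OF e(1)])
  have bxe: "g.bx d = boxe \<epsilon> d" for d unfolding g.bx_def boxe_def ..
  have lin: "(\<lambda>i\<in>N. c i + a * d i) \<in> g.Sset" if "c \<in> g.Sset" "d \<in> g.Sset" "av a \<le> 1" for c d a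
    using g.Sset_vlin[OF that] unfolding g.vlin_def .
  have zero: "(\<lambda>i\<in>N. 0) \<in> g.Sset" using g.zv_Sset unfolding g.zv_def .
  have rho: "\<epsilon> * RR i = \<epsilon> * (if 0 < r i then r i else 1)" if "i \<in> N" for i unfolding RR_def ..
  have orth: "Max (insert 0 ((\<lambda>i. av (\<alpha> i) * r i) ` N)) = 0"
    if h: "\<forall>s\<in>g.Sset. av (\<Sum>i\<in>N. \<alpha> i * s i) \<le> theta * Max (insert 0 ((\<lambda>i. av (\<alpha> i) * r i) ` N))" for \<alpha>
  proof (rule r_orth)
    show "AE x in \<mu>. av (\<Sum>i\<in>N. \<alpha> i * x i) \<le> theta * Max (insert 0 ((\<lambda>i. av (\<alpha> i) * r i) ` N))"
      using g.AE_Sset by (rule AE_mp) (use h in \<open>auto intro!: AE_I2\<close>)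
  qed
  have Lat: "\<exists>w\<in>g.Sset. w j = y \<and> (\<forall>k\<in>N-{j}. w k = 0)" if "j \<in> N" "av y \<le> r j" for j y
  proof -
    have "N \<subseteq> N" by simp
    show ?thesis
      apply (rule lattice_lemma[where N=N and S="g.Sset" and \<rho>="\<lambda>i. \<epsilon> * RR i" and r=r and \<epsilon>=\<epsilon> and I=N and j=j and y=y])
      apply (rule finN)
      apply (erule (2) lin)
      apply (rule zero)
      apply (erule g.small_Sset, assumption)
      apply (erule (1) g.Sset_bound[OF r_ae])
      apply (erule r_nn)
      apply (erule r_val)
      apply (erule rho)
      apply (rule e(1))
      apply (rule e(2))
      apply (erule orth)
      apply (rule \<open>N \<subseteq> N\<close>)
      apply (rule that(1))
      apply (rule that(2))
      done
  qed
  define W where "W j = (SOME w. w \<in> g.Sset \<and> w j = t j \<and> (\<forall>k\<in>N-{j}. w k = 0))" for j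
  have W: "W j \<in> g.Sset \<and> W j j = t j \<and> (\<forall>k\<in>N-{j}. W j k = 0)" if "j \<in> N" for j
  proof -
    have "\<exists>w. w \<in> g.Sset \<and> w j = t j \<and> (\<forall>k\<in>N-{j}. w k = 0)" using Lat[OF that] t(2) that by blast
    then show ?thesis unfolding W_def by (rule someI_ex)
  qed
  have mem: "(\<lambda>k\<in>N. \<Sum>j\<in>N. 1 * W j k) \<in> g.Sset"
    by (rule lin_sum_closed[where S = g.Sset and N = N and A = N and W = W and a = "\<lambda>_. 1", OF lin zero finN])
       (use W in auto)
  have "(\<lambda>k\<in>N. \<Sum>j\<in>N. 1 * W j k) = t"
  proof
    fix k show "(\<lambda>k\<in>N. \<Sum>j\<in>N. 1 * W j k) k = t k"
    proof (cases "k \<in> N")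
      case True
      have "(\<Sum>j\<in>N. 1 * W j k) = (\<Sum>j\<in>N. if j = k then t k else 0)"
        by (rule sum.cong[OF refl]) (use W True in auto)
      also have "\<dots> = t k" using True finN by simp
      finally show ?thesis using True by simp
    next
      case False then show ?thesis using t(1) by (simp add: PiE_def extensional_def)
    qed
  qed
  with mem have tS: "t \<in> g.Sset" by simp
  from g.shift_inv[OF tS c] show ?thesis unfolding g.fb_def g.vsub_def bxe .
qed

definition Gen where
  "Gen = {boxe \<epsilon> c | \<epsilon> c. 0 < \<epsilon> \<and> \<epsilon> \<le> theta \<and> c \<in> PiE N (\<lambda>_. UNIV)} \<union> {{}, space \<mu>}"

lemma Gen_sub: "Gen \<subseteq> sets \<mu>"
  unfolding Gen_def using boxe_sets by auto

lemma Gen_pow: "Gen \<subseteq> Pow (space \<mu>)"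
  using Gen_sub sets.sets_into_space by blast

lemma box_int: assumes "0 < \<epsilon>" "\<epsilon> \<le> theta" "0 < \<epsilon>'" "\<epsilon>' \<le> theta"
  shows "boxe \<epsilon> c \<inter> boxe \<epsilon>' c' \<in> Gen"
proof (cases "boxe \<epsilon> c \<inter> boxe \<epsilon>' c' = {}")
  case True then show ?thesis by (simp add: Gen_def)
next
  case False
  then obtain z where z: "z \<in> boxe \<epsilon> c" "z \<in> boxe \<epsilon>' c'" by blast
  have zP: "z \<in> PiE N (\<lambda>_. UNIV)" using z(1) by (simp add: boxe_def)
  have e1: "boxe \<epsilon> c = boxe \<epsilon> z" using boxe_move[OF assms(1) z(1)] by simp
  have e2: "boxe \<epsilon>' c' = boxe \<epsilon>' z" using boxe_move[OF assms(3) z(2)] by simp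
  show ?thesis
  proof (cases "\<epsilon> \<le> \<epsilon>'")
    case True
    then have "boxe \<epsilon> c \<inter> boxe \<epsilon>' c' = boxe \<epsilon> z" using boxe_mono[OF True, of z] e1 e2 by auto
    then show ?thesis using assms zP by (auto simp: Gen_def)
  next
    case False
    then have "boxe \<epsilon> c \<inter> boxe \<epsilon>' c' = boxe \<epsilon>' z" using boxe_mono[of \<epsilon>' \<epsilon> z] e1 e2 by auto
    then show ?thesis using assms zP by (auto simp: Gen_def)
  qed
qed

lemma Int_stable_Gen: "Int_stable Gen"
proof (rule Int_stableI)
  fix a b assume a: "a \<in> Gen" and b: "b \<in> Gen"
  have asp: "a \<subseteq> space \<mu>" "b \<subseteq> space \<mu>" using a b Gen_pow by auto
  show "a \<inter> b \<in> Gen"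
  proof (cases "a = {} \<or> b = {}")
    case True then show ?thesis by (auto simp: Gen_def)
  next
    case F1: False
    show ?thesis
    proof (cases "a = space \<mu>")
      case True then show ?thesis using b asp by (simp add: Int_absorb1)
    next
      case F2: False
      show ?thesis
      proof (cases "b = space \<mu>")
        case True then show ?thesis using a asp by (simp add: Int_absorb2)
      next
        case F3: False
        obtain \<epsilon> c where ea: "a = boxe \<epsilon> c" "0 < \<epsilon>" "\<epsilon> \<le> theta" using a F1 F2 by (auto simp: Gen_def)
        obtain \<epsilon>' c' where eb: "b = boxe \<epsilon>' c'" "0 < \<epsilon>'" "\<epsilon>' \<le> theta" using b F1 F3 by (auto simp: Gen_def)
        show ?thesis using box_int[OF ea(2,3) eb(2,3)] ea(1) eb(1) by simp
      qed
    qed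
  qed
qed

lemma proj_meas: assumes i: "i \<in> N" shows "(\<lambda>f. f i) \<in> measurable (sigma (space \<mu>) Gen) borel"
proof -
  have "(\<lambda>f. f i) \<in> measurable (sigma (space \<mu>) Gen) (sigma UNIV Bs)"
  proof (rule measurable_measure_of)
    show "Bs \<subseteq> Pow UNIV" by simp
    show "(\<lambda>f. f i) \<in> space (sigma (space \<mu>) Gen) \<rightarrow> UNIV" by simp
    fix B assume "B \<in> Bs"
    then obtain d m where dm: "d \<in> Dn" "B = ball d (1 / Suc m)" unfolding Bs_def by auto
    define r' :: real where "r' = 1 / Suc m"
    have r'pos: "0 < r'" unfolding r'_def by simp
    define e0 where "e0 = min theta (r' / RR i)"
    have e0: "0 < e0" "e0 \<le> theta" "e0 * RR i \<le> r'"
      unfolding e0_def using theta(1) r'pos RR_pos[of i] by (auto simp: min_def field_simps)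
    interpret g: gbox av N \<mu> "\<lambda>i. e0 * RR i" by (rule gbox_e[OF e0(1)])
    define C where "C = {c \<in> PiE N (\<lambda>_. Dn). av (d - c i) < r'}"
    have cC: "countable C" using g.countable_Dvec unfolding C_def g.Dvec_def
      by (rule countable_subset[rotated]) auto
    have eq: "(\<lambda>f. f i) -` B \<inter> space (sigma (space \<mu>) Gen) = (\<Union>c\<in>C. boxe e0 c)"
    proof (intro set_eqI iffI)
      fix f assume "f \<in> (\<lambda>f. f i) -` B \<inter> space (sigma (space \<mu>) Gen)"
      then have f: "f \<in> PiE N (\<lambda>_. UNIV)" "av (d - f i) < r'"
        using Gen_pow by (auto simp: dm r'_def dist_av space_mu)
      obtain c where c: "c \<in> g.Dvec" "f \<in> g.bx c" using g.cover[OF f(1)] by blast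
      have fc: "av (f i - c i) < e0 * RR i" using c(2) i by (simp add: g.bx_def)
      have "av (d - c i) = av ((d - f i) + (f i - c i))" by simp
      also have "\<dots> \<le> max (av (d - f i)) (av (f i - c i))" by (rule av_ultra)
      also have "\<dots> < r'" using f(2) fc e0(3) by simp
      finally have "c \<in> C" using c(1) by (simp add: C_def g.Dvec_def)
      moreover have "f \<in> boxe e0 c" using c(2) by (simp add: g.bx_def boxe_def)
      ultimately show "f \<in> (\<Union>c\<in>C. boxe e0 c)" by blast
    next
      fix f assume "f \<in> (\<Union>c\<in>C. boxe e0 c)"
      then obtain c where c: "c \<in> C" "f \<in> boxe e0 c" by blast
      have fP: "f \<in> PiE N (\<lambda>_. UNIV)" using c(2) by (simp add: boxe_def)
      have fc: "av (f i - c i) < e0 * RR i" using c(2) i by (simp add: boxe_def)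
      have "av (d - f i) = av ((d - c i) + (c i - f i))" by simp
      also have "\<dots> \<le> max (av (d - c i)) (av (c i - f i))" by (rule av_ultra)
      also have "\<dots> < r'" using c(1) fc e0(3) by (simp add: C_def av_diff_commute)
      finally show "f \<in> (\<lambda>f. f i) -` B \<inter> space (sigma (space \<mu>) Gen)"
        using fP Gen_pow by (simp add: dm r'_def dist_av space_mu)
    qed
    have "(\<Union>c\<in>C. boxe e0 c) \<in> sets (sigma (space \<mu>) Gen)"
    proof (rule sets.countable_UN''[OF cC])
      fix c assume "c \<in> C"
      then have "boxe e0 c \<in> Gen" using e0 by (auto simp: Gen_def C_def PiE_iff)
      then show "boxe e0 c \<in> sets (sigma (space \<mu>) Gen)" using Gen_pow by auto
    qed
    then show "(\<lambda>f. f i) -` B \<inter> space (sigma (space \<mu>) Gen) \<in> sets (sigma (space \<mu>) Gen)"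
      using eq by simp
  qed
  then show ?thesis by (simp add: borel_eq_Bs)
qed

lemma sigma_Gen: "sets \<mu> = sigma_sets (space \<mu>) Gen"
proof (rule antisym)
  have "sets \<mu> = sigma_sets (PiE N (\<lambda>_. UNIV)) {{f \<in> PiE N (\<lambda>_. UNIV). f i \<in> A} | i A. i \<in> N \<and> A \<in> sets borel}"
    unfolding sets_mu by (simp add: sets_PiM_single)
  also have "\<dots> \<subseteq> sigma_sets (space \<mu>) Gen"
    unfolding space_mu[symmetric]
  proof (rule sigma_sets_mono, safe)
    fix i and A :: "'k set" assume i: "i \<in> N" and A: "A \<in> sets borel"
    have "(\<lambda>f. f i) -` A \<inter> space (sigma (space \<mu>) Gen) \<in> sets (sigma (space \<mu>) Gen)"
      using measurable_sets[OF proj_meas[OF i] A] .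
    then show "{f \<in> space \<mu>. f i \<in> A} \<in> sigma_sets (space \<mu>) Gen"
      using Gen_pow by (simp add: Int_def conj_commute vimage_def)
  qed
  finally show "sets \<mu> \<subseteq> sigma_sets (space \<mu>) Gen" .
  show "sigma_sets (space \<mu>) Gen \<subseteq> sets \<mu>"
    by (rule sets.sigma_sets_subset[OF Gen_sub])
qed

lemma shift_meas: "(\<lambda>x. \<lambda>i\<in>N. x i + t i) \<in> measurable \<mu> (PiM N (\<lambda>_. borel :: 'k measure))"
proof -
  have "(\<lambda>x. \<lambda>i\<in>N. x i + t i) \<in> measurable (PiM N (\<lambda>_. borel :: 'k measure)) (PiM N (\<lambda>_. borel :: 'k measure))"
    by measurable
  then show ?thesis by (subst measurable_cong_sets[OF sets_mu refl])
qed

lemma distr_shift: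
  assumes t: "t \<in> PiE N (\<lambda>_. UNIV)" "\<forall>i\<in>N. av (t i) \<le> r i"
  shows "distr \<mu> (PiM N (\<lambda>_. borel :: 'k measure)) (\<lambda>x. \<lambda>i\<in>N. x i + t i) = \<mu>"
proof (rule measure_eqI_generator_eq[where \<Omega> = "space \<mu>" and E = Gen and A = "\<lambda>_. space \<mu>"])
  show "Int_stable Gen" by (rule Int_stable_Gen)
  show "Gen \<subseteq> Pow (space \<mu>)" by (rule Gen_pow)
  show "sets (distr \<mu> (PiM N (\<lambda>_. borel)) (\<lambda>x. \<lambda>i\<in>N. x i + t i)) = sigma_sets (space \<mu>) Gen"
    using sigma_Gen sets_mu by simp
  show "sets \<mu> = sigma_sets (space \<mu>) Gen" by (rule sigma_Gen)
  show "range (\<lambda>_. space \<mu>) \<subseteq> Gen" by (simp add: Gen_def)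
  show "(\<Union>i::nat. space \<mu>) = space \<mu>" by simp
  show "emeasure (distr \<mu> (PiM N (\<lambda>_. borel)) (\<lambda>x. \<lambda>i\<in>N. x i + t i)) (space \<mu>) \<noteq> \<infinity>" for i::nat
  proof -
    have sp: "space \<mu> \<in> sets (PiM N (\<lambda>_. borel :: 'k measure))" using sets_mu sets.top by metis
    show ?thesis using emeasure_distr[OF shift_meas sp] by (simp add: mu.emeasure_eq_measure)
  qed
  fix X assume X: "X \<in> Gen"
  have Xs: "X \<in> sets (PiM N (\<lambda>_. borel :: 'k measure))" using X Gen_sub sets_mu by auto
  have "emeasure (distr \<mu> (PiM N (\<lambda>_. borel)) (\<lambda>x. \<lambda>i\<in>N. x i + t i)) X
      = emeasure \<mu> ((\<lambda>x. \<lambda>i\<in>N. x i + t i) -` X \<inter> space \<mu>)"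
    by (rule emeasure_distr[OF shift_meas Xs])
  also have "\<dots> = emeasure \<mu> X"
  proof -
    consider "X = {}" | "X = space \<mu>" | \<epsilon> c where "X = boxe \<epsilon> c" "0 < \<epsilon>" "\<epsilon> \<le> theta" "c \<in> PiE N (\<lambda>_. UNIV)"
      using X unfolding Gen_def by blast
    then show ?thesis
    proof cases
      case 1 then show ?thesis by simp
    next
      case 2 then show ?thesis by (simp add: space_mu Int_absorb1 subsetI)
    next
      case 3
      have "(\<lambda>x. \<lambda>i\<in>N. x i + t i) -` X \<inter> space \<mu> = boxe \<epsilon> (\<lambda>i\<in>N. c i - t i)"
        using 3 by (auto simp: boxe_def space_mu algebra_simps)
      then have "emeasure \<mu> ((\<lambda>x. \<lambda>i\<in>N. x i + t i) -` X \<inter> space \<mu>) = measure \<mu> (boxe \<epsilon> (\<lambda>i\<in>N. c i - t i))"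
        by (simp add: mu.emeasure_eq_measure)
      also have "\<dots> = ennreal (measure \<mu> (boxe \<epsilon> c))" using box_shift[OF 3(2,3) t 3(4)] by simp
      finally show ?thesis using 3 by (simp add: mu.emeasure_eq_measure)
    qed
  qed
  finally show "emeasure (distr \<mu> (PiM N (\<lambda>_. borel)) (\<lambda>x. \<lambda>i\<in>N. x i + t i)) X = emeasure \<mu> X" .
qed

end


locale pvec = lfk av for av :: "'k::{field,metric_space} \<Rightarrow> real" +
  fixes N :: "nat set" and Mi :: "nat \<Rightarrow> 'k measure"
  assumes finN: "finite N" and prob_Mi: "\<And>i. prob_space (Mi i)" and sets_Mi: "\<And>i. sets (Mi i) = sets borel"

lemma (in pvec) fpps: "finite_product_prob_space Mi N"
  by (intro finite_product_prob_space.intro finite_product_sigma_finite.intro product_prob_space.intro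
      product_sigma_finite.intro product_prob_space_axioms.intro finite_product_sigma_finite_axioms.intro)
     (auto simp: prob_Mi prob_space_imp_sigma_finite finN)

sublocale pvec \<subseteq> PS: finite_product_prob_space Mi N by (rule fpps)

context pvec begin

lemma nu_prob: "prob_space (PiM N Mi)" by (rule PS.prob_space_axioms)

lemma sets_nu: "sets (PiM N Mi) = sets (PiM N (\<lambda>_. borel :: 'k measure))"
  by (intro sets_PiM_cong refl sets_Mi)

lemma space_nu: "space (PiM N Mi) = PiE N (\<lambda>_. UNIV)"
  by (simp add: space_PiM sets_eq_imp_space_eq[OF sets_Mi])

lemma Mi_space: "space (Mi i) = UNIV" using sets_eq_imp_space_eq[OF sets_Mi] by simp

lemma sets_Mi2: "sets (Mi i \<Otimes>\<^sub>M Mi i) = sets (borel \<Otimes>\<^sub>M borel :: ('k \<times> 'k) measure)"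
  by (intro sets_pair_measure_cong sets_Mi)

lemma prod_rect:
  assumes C: "\<And>i. i \<in> N \<Longrightarrow> C i \<in> sets (borel \<Otimes>\<^sub>M borel :: ('k \<times> 'k) measure)"
  shows "emeasure (PiM N Mi \<Otimes>\<^sub>M PiM N Mi) {p \<in> space (PiM N Mi \<Otimes>\<^sub>M PiM N Mi). \<forall>i\<in>N. (fst p i, snd p i) \<in> C i}
       = (\<Prod>i\<in>N. emeasure (Mi i \<Otimes>\<^sub>M Mi i) (C i))"
proof -

  let ?S = "{p \<in> space (PiM N Mi \<Otimes>\<^sub>M PiM N Mi). \<forall>i\<in>N. (fst p i, snd p i) \<in> C i}"
  have Ci: "C i \<in> sets (Mi i \<Otimes>\<^sub>M Mi i)" if "i \<in> N" for i using C[OF that] sets_Mi2 by simp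
  have S: "?S \<in> sets (PiM N Mi \<Otimes>\<^sub>M PiM N Mi)"
  proof -
    have "?S = space (PiM N Mi \<Otimes>\<^sub>M PiM N Mi) \<inter> (\<Inter>i\<in>N. (\<lambda>p. (fst p i, snd p i)) -` C i \<inter> space (PiM N Mi \<Otimes>\<^sub>M PiM N Mi))"
      by auto
    also have "\<dots> \<in> sets (PiM N Mi \<Otimes>\<^sub>M PiM N Mi)"
    proof (cases "N = {}")
      case True then show ?thesis by simp
    next
      case False
      show ?thesis
      proof (rule sets.Int[OF sets.top], rule sets.finite_INT[OF finN False])
      fix i assume i: "i \<in> N"
      have "(\<lambda>p. (fst p i, snd p i)) \<in> measurable (PiM N Mi \<Otimes>\<^sub>M PiM N Mi) (Mi i \<Otimes>\<^sub>M Mi i)"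
        using i by measurable
      then show "(\<lambda>p. (fst p i, snd p i)) -` C i \<inter> space (PiM N Mi \<Otimes>\<^sub>M PiM N Mi) \<in> sets (PiM N Mi \<Otimes>\<^sub>M PiM N Mi)"
        using Ci[OF i] by (rule measurable_sets)
      qed
    qed
    finally show ?thesis .
  qed
  have "emeasure (PiM N Mi \<Otimes>\<^sub>M PiM N Mi) ?S = (\<integral>\<^sup>+ x. emeasure (PiM N Mi) (Pair x -` ?S) \<partial>PiM N Mi)"
    by (rule PS.emeasure_pair_measure_alt[OF S])
  also have "\<dots> = (\<integral>\<^sup>+ x. (\<Prod>i\<in>N. emeasure (Mi i) (Pair (x i) -` C i)) \<partial>PiM N Mi)"
  proof (rule nn_integral_cong)
    fix x assume x: "x \<in> space (PiM N Mi)"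
    have "Pair x -` ?S = PiE N (\<lambda>i. Pair (x i) -` C i)"
      using x by (auto simp: space_pair_measure space_nu PiE_iff extensional_def)
    moreover have "emeasure (PiM N Mi) (PiE N (\<lambda>i. Pair (x i) -` C i)) = (\<Prod>i\<in>N. emeasure (Mi i) (Pair (x i) -` C i))"
      by (rule PS.emeasure_PiM[OF finN]) (use Ci in \<open>auto intro: sets_Pair1\<close>)
    ultimately show "emeasure (PiM N Mi) (Pair x -` ?S) = (\<Prod>i\<in>N. emeasure (Mi i) (Pair (x i) -` C i))" by simp
  qed
  also have "\<dots> = (\<Prod>i\<in>N. \<integral>\<^sup>+ u. emeasure (Mi i) (Pair u -` C i) \<partial>Mi i)"
    by (rule PS.product_nn_integral_prod[OF finN]) (use Ci in \<open>auto intro: PS.M.measurable_emeasure_Pair\<close>)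
  also have "\<dots> = (\<Prod>i\<in>N. emeasure (Mi i \<Otimes>\<^sub>M Mi i) (C i))"
    by (rule prod.cong[OF refl]) (use Ci in \<open>simp add: PS.M.emeasure_pair_measure_alt\<close>)
  finally show ?thesis .
qed

lemma shift_k_meas[measurable]: "(\<lambda>w::'k. w + c) \<in> borel_measurable borel"
  by measurable

lemma prod_shift:
  assumes inv: "\<And>i A. i \<in> N \<Longrightarrow> A \<in> sets borel \<Longrightarrow> emeasure (Mi i) ((\<lambda>w. w + t i) -` A) = emeasure (Mi i) A"
  shows "distr (PiM N Mi) (PiM N (\<lambda>_. borel)) (\<lambda>x. \<lambda>i\<in>N. x i + t i) = PiM N Mi"
proof -
  have T: "(\<lambda>x. \<lambda>i\<in>N. x i + t i) \<in> measurable (PiM N Mi) (PiM N (\<lambda>_. borel :: 'k measure))"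
  proof -
    have "(\<lambda>x. \<lambda>i\<in>N. x i + t i) \<in> measurable (PiM N (\<lambda>_. borel :: 'k measure)) (PiM N (\<lambda>_. borel :: 'k measure))"
      by measurable
    then show ?thesis by (subst measurable_cong_sets[OF sets_nu refl])
  qed
  show ?thesis
  proof (rule PS.PiM_eqI[OF finN])
    show "sets (distr (PiM N Mi) (PiM N (\<lambda>_. borel)) (\<lambda>x. \<lambda>i\<in>N. x i + t i)) = sets (PiM N Mi)"
      using sets_nu by simp
    fix A assume A: "\<And>i. i \<in> N \<Longrightarrow> A i \<in> sets (Mi i)"
    have Ab: "A i \<in> sets borel" if "i \<in> N" for i using A[OF that] sets_Mi by simp
    have PA: "PiE N A \<in> sets (PiM N (\<lambda>_. borel :: 'k measure))"
      using Ab finN by (intro sets_PiM_I_finite) auto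
    have "emeasure (distr (PiM N Mi) (PiM N (\<lambda>_. borel)) (\<lambda>x. \<lambda>i\<in>N. x i + t i)) (PiE N A)
        = emeasure (PiM N Mi) ((\<lambda>x. \<lambda>i\<in>N. x i + t i) -` PiE N A \<inter> space (PiM N Mi))"
      by (rule emeasure_distr[OF T PA])
    also have "(\<lambda>x. \<lambda>i\<in>N. x i + t i) -` PiE N A \<inter> space (PiM N Mi) = PiE N (\<lambda>i. (\<lambda>w. w + t i) -` A i)"
      by (auto simp: space_nu PiE_iff)
    also have "emeasure (PiM N Mi) (PiE N (\<lambda>i. (\<lambda>w. w + t i) -` A i)) = (\<Prod>i\<in>N. emeasure (Mi i) ((\<lambda>w. w + t i) -` A i))"
    proof (rule PS.emeasure_PiM[OF finN])
      fix i assume i: "i \<in> N"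
      have "(\<lambda>w. w + t i) -` A i \<inter> space borel \<in> sets borel"
        using Ab[OF i] by (intro measurable_sets[OF shift_k_meas])
      then show "(\<lambda>w. w + t i) -` A i \<in> sets (Mi i)" using sets_Mi by simp
    qed
    also have "\<dots> = (\<Prod>i\<in>N. emeasure (Mi i) (A i))"
      by (rule prod.cong[OF refl]) (rule inv[OF _ Ab])
    finally show "emeasure (distr (PiM N Mi) (PiM N (\<lambda>_. borel)) (\<lambda>x. \<lambda>i\<in>N. x i + t i)) (PiE N A) = (\<Prod>i\<in>N. emeasure (Mi i) (A i))" .
  qed
qed

lemma lin2_meas[measurable]:
  "(\<lambda>(x1::'k, x2::'k). (a11 * x1 + a12 * x2, a21 * x1 + a22 * x2)) \<in> measurable (borel \<Otimes>\<^sub>M borel) (borel \<Otimes>\<^sub>M borel)"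
proof -
  have "(\<lambda>p::'k \<times> 'k. (a11 * fst p + a12 * snd p, a21 * fst p + a22 * snd p)) \<in> measurable (borel \<Otimes>\<^sub>M borel) (borel \<Otimes>\<^sub>M borel)"
    by measurable
  then show ?thesis by (simp add: case_prod_beta')
qed

lemma prod_gauss:
  assumes G: "\<And>i. i \<in> N \<Longrightarrow> distr (Mi i \<Otimes>\<^sub>M Mi i) (borel \<Otimes>\<^sub>M borel) (\<lambda>(x1, x2). (a11 * x1 + a12 * x2, a21 * x1 + a22 * x2)) = Mi i \<Otimes>\<^sub>M Mi i"
  shows "distr (PiM N Mi \<Otimes>\<^sub>M PiM N Mi) (PiM N (\<lambda>_. borel) \<Otimes>\<^sub>M PiM N (\<lambda>_. borel))
      (\<lambda>(x1, x2). (\<lambda>i\<in>N. a11 * x1 i + a12 * x2 i, \<lambda>i\<in>N. a21 * x1 i + a22 * x2 i)) = PiM N Mi \<Otimes>\<^sub>M PiM N Mi"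
    (is "distr ?Q (?E \<Otimes>\<^sub>M ?E) ?F = ?Q")
proof -
  let ?f = "\<lambda>(x1::'k, x2::'k). (a11 * x1 + a12 * x2, a21 * x1 + a22 * x2)"
  define Ea where "Ea = {PiE N X | X. X \<in> Pi N (\<lambda>_. sets (borel :: 'k measure))}"
  define G2 where "G2 = {a \<times> b | a b. a \<in> Ea \<and> b \<in> Ea}"
  have spE: "space ?E = PiE N (\<lambda>_. UNIV)" by (simp add: space_PiM)
  have EaP: "Ea \<subseteq> Pow (space ?E)" unfolding Ea_def spE by (auto simp: PiE_iff)
  have sE: "sets ?E = sigma_sets (space ?E) Ea"
    unfolding sets_PiM prod_algebra_eq_finite[OF finN] Ea_def by (simp add: space_PiM)
  have spEa: "space ?E \<in> Ea" unfolding Ea_def spE by auto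
  have sEE: "sets (?E \<Otimes>\<^sub>M ?E) = sigma_sets (space ?E \<times> space ?E) G2"
  proof -
    have "sets (?E \<Otimes>\<^sub>M ?E) = sets (sigma (space ?E \<times> space ?E) {a \<times> b | a b. a \<in> Ea \<and> b \<in> Ea})"
      by (rule sets_pair_eq[OF EaP sE _ _ _ EaP sE, of "{space ?E}" "{space ?E}"]) (use spEa in auto)
    also have "\<dots> = sigma_sets (space ?E \<times> space ?E) G2"
      unfolding G2_def using EaP by (intro sets_measure_of) auto
    finally show ?thesis .
  qed
  have G2P: "G2 \<subseteq> Pow (space ?E \<times> space ?E)" unfolding G2_def using EaP by auto
  have sQ: "sets ?Q = sets (?E \<Otimes>\<^sub>M ?E)" by (intro sets_pair_measure_cong sets_nu)
  have spQ: "space ?Q = space ?E \<times> space ?E" using sets_eq_imp_space_eq[OF sQ] by (simp add: space_pair_measure)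
  have Fm: "?F \<in> measurable ?Q (?E \<Otimes>\<^sub>M ?E)"
  proof -
    have "(\<lambda>p. (\<lambda>i\<in>N. a11 * fst p i + a12 * snd p i, \<lambda>i\<in>N. a21 * fst p i + a22 * snd p i)) \<in> measurable (?E \<Otimes>\<^sub>M ?E) (?E \<Otimes>\<^sub>M ?E)"
      by measurable
    then have "?F \<in> measurable (?E \<Otimes>\<^sub>M ?E) (?E \<Otimes>\<^sub>M ?E)" by (simp add: case_prod_beta')
    then show ?thesis by (subst measurable_cong_sets[OF sQ refl])
  qed
  interpret Q: prob_space ?Q by (intro prob_space_pair nu_prob)
  have fmeas: "?f \<in> measurable (Mi i \<Otimes>\<^sub>M Mi i) (borel \<Otimes>\<^sub>M borel)" for i
    by (subst measurable_cong_sets[OF sets_Mi2 refl]) (rule lin2_meas)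
  have space2: "space (borel \<Otimes>\<^sub>M borel :: ('k \<times> 'k) measure) = UNIV" by (simp add: space_pair_measure)
  have fpre: "?f -` (X \<times> Y) \<in> sets (borel \<Otimes>\<^sub>M borel)" if "X \<in> sets borel" "Y \<in> sets borel" for X Y :: "'k set"
    using measurable_sets[OF lin2_meas, of "X \<times> Y"] that space2 by simp
  show ?thesis
  proof (rule measure_eqI_generator_eq[where \<Omega> = "space ?E \<times> space ?E" and E = G2 and A = "\<lambda>_. space ?E \<times> space ?E"])
    show "Int_stable G2"
    proof (rule Int_stableI)
      fix a b assume "a \<in> G2" "b \<in> G2"
      then obtain X Y X' Y' where ab: "a = PiE N X \<times> PiE N Y" "b = PiE N X' \<times> PiE N Y'"
        "X \<in> Pi N (\<lambda>_. sets borel)" "Y \<in> Pi N (\<lambda>_. sets borel)" "X' \<in> Pi N (\<lambda>_. sets borel)" "Y' \<in> Pi N (\<lambda>_. sets borel)"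
        unfolding G2_def Ea_def by blast
      have "a \<inter> b = PiE N (\<lambda>i. X i \<inter> X' i) \<times> PiE N (\<lambda>i. Y i \<inter> Y' i)"
        unfolding ab by (auto simp: PiE_Int[symmetric])
      moreover have "(\<lambda>i. X i \<inter> X' i) \<in> Pi N (\<lambda>_. sets borel)" "(\<lambda>i. Y i \<inter> Y' i) \<in> Pi N (\<lambda>_. sets borel)"
        using ab by auto
      ultimately show "a \<inter> b \<in> G2" unfolding G2_def Ea_def by blast
    qed
    show "G2 \<subseteq> Pow (space ?E \<times> space ?E)" by (rule G2P)
    show "sets (distr ?Q (?E \<Otimes>\<^sub>M ?E) ?F) = sigma_sets (space ?E \<times> space ?E) G2" using sEE by simp
    show "sets ?Q = sigma_sets (space ?E \<times> space ?E) G2" using sQ sEE by simp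
    show "range (\<lambda>_. space ?E \<times> space ?E) \<subseteq> G2" using spEa unfolding G2_def by blast
    show "(\<Union>i::nat. space ?E \<times> space ?E) = space ?E \<times> space ?E" by simp
    show "emeasure (distr ?Q (?E \<Otimes>\<^sub>M ?E) ?F) (space ?E \<times> space ?E) \<noteq> \<infinity>" for i :: nat
    proof -
      have "space ?E \<times> space ?E \<in> sets (?E \<Otimes>\<^sub>M ?E)" by (metis sets.top space_pair_measure)
      then show ?thesis by (simp add: emeasure_distr[OF Fm] Q.emeasure_eq_measure)
    qed
    fix Z assume "Z \<in> G2"
    then obtain X Y where Z: "Z = PiE N X \<times> PiE N Y" "\<And>i. i \<in> N \<Longrightarrow> X i \<in> sets borel" "\<And>i. i \<in> N \<Longrightarrow> Y i \<in> sets borel"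
      unfolding G2_def Ea_def by blast
    have Zs: "Z \<in> sets (?E \<Otimes>\<^sub>M ?E)" unfolding Z(1) using Z(2,3) finN by (intro pair_measureI sets_PiM_I_finite) auto
    have "emeasure (distr ?Q (?E \<Otimes>\<^sub>M ?E) ?F) Z = emeasure ?Q (?F -` Z \<inter> space ?Q)"
      by (rule emeasure_distr[OF Fm Zs])
    also have "?F -` Z \<inter> space ?Q = {p \<in> space ?Q. \<forall>i\<in>N. (fst p i, snd p i) \<in> ?f -` (X i \<times> Y i)}"
      unfolding Z(1) spQ spE by (auto simp: PiE_iff)
    also have "emeasure ?Q \<dots> = (\<Prod>i\<in>N. emeasure (Mi i \<Otimes>\<^sub>M Mi i) (?f -` (X i \<times> Y i)))"
      by (rule prod_rect) (use fpre Z in auto)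
    also have "\<dots> = (\<Prod>i\<in>N. emeasure (Mi i \<Otimes>\<^sub>M Mi i) (X i \<times> Y i))"
    proof (rule prod.cong[OF refl])
      fix i assume i: "i \<in> N"
      have XY: "X i \<times> Y i \<in> sets (borel \<Otimes>\<^sub>M borel)" using Z i by auto
      have sp: "space (Mi i \<Otimes>\<^sub>M Mi i) = UNIV" by (simp add: space_pair_measure Mi_space)
      have "emeasure (Mi i \<Otimes>\<^sub>M Mi i) (?f -` (X i \<times> Y i)) = emeasure (distr (Mi i \<Otimes>\<^sub>M Mi i) (borel \<Otimes>\<^sub>M borel) ?f) (X i \<times> Y i)"
        using emeasure_distr[OF fmeas XY] sp by simp
      also have "\<dots> = emeasure (Mi i \<Otimes>\<^sub>M Mi i) (X i \<times> Y i)" using G[OF i] by simp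
      finally show "emeasure (Mi i \<Otimes>\<^sub>M Mi i) (?f -` (X i \<times> Y i)) = emeasure (Mi i \<Otimes>\<^sub>M Mi i) (X i \<times> Y i)" .
    qed
    also have "\<dots> = emeasure ?Q {p \<in> space ?Q. \<forall>i\<in>N. (fst p i, snd p i) \<in> X i \<times> Y i}"
      by (rule prod_rect[symmetric]) (use Z in auto)
    also have "{p \<in> space ?Q. \<forall>i\<in>N. (fst p i, snd p i) \<in> X i \<times> Y i} = Z"
      unfolding Z(1) spQ spE by (auto simp: PiE_iff)
    finally show "emeasure (distr ?Q (?E \<Otimes>\<^sub>M ?E) ?F) Z = emeasure ?Q Z" .
  qed
qed

end


context lfk begin

lemma esssup_facts:
  fixes f :: "'a \<Rightarrow> 'k"
  assumes P: "prob_space M" and fm: "f \<in> borel_measurable M" and bd: "AE \<omega> in M. av (f \<omega>) < R"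
  defines "s \<equiv> esssup M (\<lambda>\<omega>. ereal (av (f \<omega>)))"
  shows "s = ereal (real_of_ereal s)" "0 \<le> real_of_ereal s" "AE \<omega> in M. av (f \<omega>) \<le> real_of_ereal s"
    "real_of_ereal s \<in> range av" "\<And>c. (AE \<omega> in M. av (f \<omega>) \<le> c) \<Longrightarrow> real_of_ereal s \<le> c"
proof -
  interpret prob_space M by (rule P)
  have gm: "(\<lambda>\<omega>. ereal (av (f \<omega>))) \<in> borel_measurable M" using fm by measurable
  have up: "s \<le> ereal R" unfolding s_def
    by (rule esssup_I[OF gm], rule AE_mp[OF bd], intro AE_I2 impI) simp
  have "esssup M (\<lambda>\<omega>. 0::ereal) \<le> s" unfolding s_def
    by (rule esssup_AE_mono) auto
  then have lo: "0 \<le> s" by (simp add: esssup_const emeasure_space_1)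
  show fin: "s = ereal (real_of_ereal s)" using up lo by (cases s) auto
  show "0 \<le> real_of_ereal s" using lo by (simp add: real_of_ereal_pos)
  have AEs: "AE \<omega> in M. ereal (av (f \<omega>)) \<le> s" unfolding s_def by (rule esssup_AE)
  show AEv: "AE \<omega> in M. av (f \<omega>) \<le> real_of_ereal s"
    using AEs by (rule AE_mp) (intro AE_I2 impI, subst (asm) fin, simp)
  show cb: "real_of_ereal s \<le> c" if "AE \<omega> in M. av (f \<omega>) \<le> c" for c
  proof -
    have "s \<le> ereal c" unfolding s_def
      by (rule esssup_I[OF gm], rule AE_mp[OF that], intro AE_I2 impI) simp
    then show ?thesis using fin by (metis ereal_less_eq(3))
  qed
  show "real_of_ereal s \<in> range av"
  proof (rule ccontr)
    assume nr: "real_of_ereal s \<notin> range av"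
    define v where "v = real_of_ereal s"
    have "v \<noteq> 0" using nr unfolding v_def by (metis av_0 rangeI)
    then have vpos: "0 < v" using \<open>0 \<le> real_of_ereal s\<close> unfolding v_def by simp
    define V where "V = {av x | x. v / 2 \<le> av x \<and> av x \<le> v}"
    have finV: "finite V" unfolding V_def using finite_vals[of "v/2" v] vpos by simp
    define m where "m = Max (insert (v/2) V)"
    have mlt: "m < v"
    proof -
      have "\<forall>u\<in>insert (v/2) V. u < v"
      proof
        fix u assume "u \<in> insert (v/2) V"
        then consider "u = v/2" | x where "u = av x" "av x \<le> v" unfolding V_def by blast
        then show "u < v"
        proof cases
          case 1 then show ?thesis using vpos by simp
        next
          case 2
          have "av x \<noteq> v" using nr unfolding v_def by (metis rangeI)
          then show ?thesis using 2 by simp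
        qed
      qed
      then show ?thesis unfolding m_def using finV by simp
    qed
    have "AE \<omega> in M. av (f \<omega>) \<le> m"
      using AEv
    proof (rule AE_mp, intro AE_I2 impI)
      fix \<omega> assume le: "av (f \<omega>) \<le> real_of_ereal s"
      show "av (f \<omega>) \<le> m"
      proof (rule ccontr)
        assume "\<not> av (f \<omega>) \<le> m"
        then have gt: "m < av (f \<omega>)" by simp
        have "v / 2 \<le> m" unfolding m_def using finV by (intro Max_ge) auto
        then have "av (f \<omega>) \<in> V" using gt le unfolding V_def v_def by auto
        then have "av (f \<omega>) \<le> m" unfolding m_def using finV by (intro Max_ge) auto
        then show False using gt by simp
      qed
    qed
    then have "v \<le> m" using cb unfolding v_def by blast
    then show False using mlt by simp
  qed
qed

end

locale gsetup = lfk av for av :: "'k::{field,metric_space} \<Rightarrow> real" +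
  fixes M :: "'a measure" and n :: nat and X :: "nat \<Rightarrow> 'a \<Rightarrow> 'k"
  assumes probM: "prob_space M" and KG: "K_gaussian_vec av n M (\<lambda>\<omega>. \<lambda>i\<in>{..<n}. X i \<omega>)"
begin

abbreviation "EE \<equiv> PiM {..<n} (\<lambda>_. borel :: 'k measure)"
abbreviation "YY \<equiv> (\<lambda>\<omega>. \<lambda>i\<in>{..<n}. X i \<omega>)"
abbreviation "mu \<equiv> distr M EE YY"

definition Mi where "Mi i = distr M borel (if i \<in> {..<n} then X i else (\<lambda>_. 0))"
definition r where "r i = real_of_ereal (Linf_norm av M (X i))"

lemma gv: "gvec av {..<n} mu"
  by (rule gvec_of_K_gaussian_vec[OF probM KG])

sublocale PM: prob_space M by (rule probM)

lemma Ym: "YY \<in> measurable M EE"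
  using KG unfolding K_gaussian_vec_def K_gaussian_def by blast

lemma Xm: "i \<in> {..<n} \<Longrightarrow> X i \<in> borel_measurable M"
proof -
  assume i: "i \<in> {..<n}"
  have "(\<lambda>\<omega>. YY \<omega> i) \<in> borel_measurable M"
    using measurable_compose[OF Ym measurable_component_singleton[OF i]] by (simp add: o_def)
  then show ?thesis using i by (simp cong: measurable_cong)
qed

lemma Mi_prob: "prob_space (Mi i)"
  unfolding Mi_def using Xm by (intro PM.prob_space_distr) auto

lemma pv: "pvec av {..<n} Mi"
  by (intro pvec.intro pvec_axioms.intro lfk_axioms Mi_prob) (auto simp: Mi_def)

lemma Mi_eq: assumes i: "i \<in> {..<n}" shows "Mi i = distr mu borel (\<lambda>x. x i)"
proof -
  have "distr mu borel (\<lambda>x. x i) = distr M borel ((\<lambda>x. x i) \<circ> YY)"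
    by (rule distr_distr[OF measurable_component_singleton[OF i] Ym])
  also have "\<dots> = distr M borel (X i)"
    using i by (intro distr_cong) auto
  finally show ?thesis using i by (simp add: Mi_def)
qed

lemma bounded_X: assumes i: "i \<in> {..<n}" shows "\<exists>R. AE \<omega> in M. av (X i \<omega>) < R"
proof -
  interpret g: gvec av "{..<n}" mu by (rule gv)
  obtain R where R: "AE x in mu. av (x i) < R" using g.bounded_coord[OF i] by blast
  have "{x \<in> space EE. av (x i) < R} \<in> sets EE" using i by measurable
  then have "AE \<omega> in M. av (YY \<omega> i) < R" using R by (subst (asm) AE_distr_iff[OF Ym]) auto
  then show ?thesis using i by auto
qed

lemma r_facts: assumes i: "i \<in> {..<n}"
  shows "Linf_norm av M (X i) = ereal (r i)" "0 \<le> r i" "AE \<omega> in M. av (X i \<omega>) \<le> r i" "r i \<in> range av"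
    "\<And>c. (AE \<omega> in M. av (X i \<omega>) \<le> c) \<Longrightarrow> r i \<le> c"
proof -
  obtain R where R: "AE \<omega> in M. av (X i \<omega>) < R" using bounded_X[OF i] by blast
  note F = esssup_facts[OF probM Xm[OF i] R]
  show "Linf_norm av M (X i) = ereal (r i)" "0 \<le> r i" "AE \<omega> in M. av (X i \<omega>) \<le> r i" "r i \<in> range av"
    "\<And>c. (AE \<omega> in M. av (X i \<omega>) \<le> c) \<Longrightarrow> r i \<le> c"
    unfolding r_def Linf_norm_def using F by auto
qed

lemma AE_M_r: "AE \<omega> in M. \<forall>i\<in>{..<n}. av (X i \<omega>) \<le> r i"
  by (rule AE_finite_allI) (auto intro: r_facts(3))

lemma AE_mu_r: "AE x in mu. \<forall>i\<in>{..<n}. av (x i) \<le> r i"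
proof -
  have "{x \<in> space EE. \<forall>i\<in>{..<n}. av (x i) \<le> r i} \<in> sets EE" by measurable
  then show ?thesis using AE_M_r by (subst AE_distr_iff[OF Ym]) auto
qed

end


context gsetup begin

abbreviation "E1 i \<equiv> PiM {i} (\<lambda>_. borel :: 'k measure)"
abbreviation "mu1 i \<equiv> distr mu (E1 i) (\<lambda>x. \<lambda>k\<in>{i}. x k)"

lemma sets_mu: "sets mu = sets EE" by simp

lemma Rm: assumes i: "i \<in> {..<n}" shows "(\<lambda>x. \<lambda>k\<in>{i}. x k) \<in> measurable mu (E1 i)"
proof -
  have "(\<lambda>x. restrict x {i}) \<in> measurable EE (E1 i)" using i by (intro measurable_restrict_subset) auto
  then show ?thesis by (subst measurable_cong_sets[OF sets_mu refl]) (simp add: restrict_def)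
qed

lemma marg_gvec: assumes i: "i \<in> {..<n}" shows "gvec av {i} (mu1 i)"
proof -
  interpret g: gvec av "{..<n}" mu by (rule gv)
  let ?R = "\<lambda>x. \<lambda>k\<in>{i}. x k"
  note Rm = Rm[OF i]
  interpret p1: prob_space "mu1 i" by (rule g.mu.prob_space_distr[OF Rm])
  show ?thesis
  proof (intro gvec.intro lfk_axioms gvec_axioms.intro)
    show "finite {i}" by simp
    show "prob_space (mu1 i)" by (rule p1.prob_space_axioms)
    show "sets (mu1 i) = sets (E1 i)" by simp
    fix a :: 'k and A assume a: "av a \<le> 1" and A: "A \<in> sets (E1 i)"
    have pre: "?R -` A \<inter> space mu \<in> sets EE" using measurable_sets[OF Rm A] by simp
    have seteq: "{p \<in> space (mu \<Otimes>\<^sub>M mu). (\<lambda>k\<in>{..<n}. fst p k + a * snd p k) \<in> ?R -` A \<inter> space mu}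
        = {p \<in> space (mu \<Otimes>\<^sub>M mu). (\<lambda>k\<in>{i}. fst p k + a * snd p k) \<in> A}"
    proof -
      have "?R (\<lambda>k\<in>{..<n}. fst p k + a * snd p k) = (\<lambda>k\<in>{i}. fst p k + a * snd p k)" for p
        using i by (auto simp: fun_eq_iff)
      moreover have ii: "{..<n} \<inter> {i} = {i}" using i by auto
      ultimately show ?thesis by (auto simp: space_PiM)
    qed
    have "emeasure (mu1 i) A = emeasure mu (?R -` A \<inter> space mu)"
      by (rule emeasure_distr[OF Rm A])
    also have "\<dots> = emeasure (mu \<Otimes>\<^sub>M mu) {p \<in> space (mu \<Otimes>\<^sub>M mu). (\<lambda>k\<in>{..<n}. fst p k + a * snd p k) \<in> ?R -` A \<inter> space mu}"
      by (rule g.gauss[OF a pre])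
    also have "emeasure (mu \<Otimes>\<^sub>M mu) {p \<in> space (mu \<Otimes>\<^sub>M mu). (\<lambda>k\<in>{..<n}. fst p k + a * snd p k) \<in> ?R -` A \<inter> space mu}
        = emeasure (mu \<Otimes>\<^sub>M mu) {p \<in> space (mu \<Otimes>\<^sub>M mu). (\<lambda>k\<in>{i}. fst p k + a * snd p k) \<in> A}"
      by (simp only: seteq)
    also have "\<dots> = emeasure (mu1 i \<Otimes>\<^sub>M mu1 i) {q \<in> space (mu1 i \<Otimes>\<^sub>M mu1 i). (\<lambda>k\<in>{i}. fst q k + a * snd q k) \<in> A}"
    proof -
      have pd: "mu1 i \<Otimes>\<^sub>M mu1 i = distr (mu \<Otimes>\<^sub>M mu) (E1 i \<Otimes>\<^sub>M E1 i) (\<lambda>(x, y). (?R x, ?R y))"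
        by (rule pair_measure_distr[OF Rm Rm]) (rule p1.sigma_finite_measure_axioms)
      have Pm: "(\<lambda>(x, y). (?R x, ?R y)) \<in> measurable (mu \<Otimes>\<^sub>M mu) (E1 i \<Otimes>\<^sub>M E1 i)"
        using Rm by measurable
      have sp1: "space (mu1 i \<Otimes>\<^sub>M mu1 i) = space (E1 i \<Otimes>\<^sub>M E1 i)" by (simp add: space_pair_measure)
      have S1: "{q \<in> space (E1 i \<Otimes>\<^sub>M E1 i). (\<lambda>k\<in>{i}. fst q k + a * snd q k) \<in> A} \<in> sets (E1 i \<Otimes>\<^sub>M E1 i)"
        using A by measurable
      have "emeasure (mu1 i \<Otimes>\<^sub>M mu1 i) {q \<in> space (mu1 i \<Otimes>\<^sub>M mu1 i). (\<lambda>k\<in>{i}. fst q k + a * snd q k) \<in> A}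
          = emeasure (mu \<Otimes>\<^sub>M mu) ((\<lambda>(x, y). (?R x, ?R y)) -` {q \<in> space (E1 i \<Otimes>\<^sub>M E1 i). (\<lambda>k\<in>{i}. fst q k + a * snd q k) \<in> A} \<inter> space (mu \<Otimes>\<^sub>M mu))"
        unfolding pd sp1[unfolded pd] by (rule emeasure_distr[OF Pm S1])
      also have "(\<lambda>(x, y). (?R x, ?R y)) -` {q \<in> space (E1 i \<Otimes>\<^sub>M E1 i). (\<lambda>k\<in>{i}. fst q k + a * snd q k) \<in> A} \<inter> space (mu \<Otimes>\<^sub>M mu)
          = {p \<in> space (mu \<Otimes>\<^sub>M mu). (\<lambda>k\<in>{i}. fst p k + a * snd p k) \<in> A}"
      proof -
        have eqf: "(\<lambda>k\<in>{i}. ?R x k + a * ?R y k) = (\<lambda>k\<in>{i}. x k + a * y k)" for x y :: "nat \<Rightarrow> 'k"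
          by (rule restrict_ext) simp
        have spE1: "(?R x, ?R y) \<in> space (E1 i \<Otimes>\<^sub>M E1 i)" for x y :: "nat \<Rightarrow> 'k"
          by (simp add: space_pair_measure space_PiM)
        show ?thesis
        proof (intro set_eqI iffI)
          fix p assume "p \<in> (\<lambda>(x, y). (?R x, ?R y)) -` {q \<in> space (E1 i \<Otimes>\<^sub>M E1 i). (\<lambda>k\<in>{i}. fst q k + a * snd q k) \<in> A} \<inter> space (mu \<Otimes>\<^sub>M mu)"
          then have "p \<in> space (mu \<Otimes>\<^sub>M mu)" "(\<lambda>k\<in>{i}. ?R (fst p) k + a * ?R (snd p) k) \<in> A"
            by (auto simp: case_prod_beta simp del: restrict_apply)
          then show "p \<in> {p \<in> space (mu \<Otimes>\<^sub>M mu). (\<lambda>k\<in>{i}. fst p k + a * snd p k) \<in> A}"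
            by (simp only: eqf mem_Collect_eq)
        next
          fix p assume "p \<in> {p \<in> space (mu \<Otimes>\<^sub>M mu). (\<lambda>k\<in>{i}. fst p k + a * snd p k) \<in> A}"
          then have "p \<in> space (mu \<Otimes>\<^sub>M mu)" "(\<lambda>k\<in>{i}. ?R (fst p) k + a * ?R (snd p) k) \<in> A"
            by (simp_all only: eqf mem_Collect_eq)
          then show "p \<in> (\<lambda>(x, y). (?R x, ?R y)) -` {q \<in> space (E1 i \<Otimes>\<^sub>M E1 i). (\<lambda>k\<in>{i}. fst q k + a * snd q k) \<in> A} \<inter> space (mu \<Otimes>\<^sub>M mu)"
            using spE1[of "fst p" "snd p"] by (auto simp: case_prod_beta simp del: restrict_apply)
        qed
      qed
      finally show ?thesis by (rule sym)
    qed
    finally show "emeasure (mu1 i) A = emeasure (mu1 i \<Otimes>\<^sub>M mu1 i) {q \<in> space (mu1 i \<Otimes>\<^sub>M mu1 i). (\<lambda>k\<in>{i}. fst q k + a * snd q k) \<in> A}" .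
  qed
qed

lemma marg_gorth: assumes i: "i \<in> {..<n}" shows "gorth av {i} (mu1 i) r"
proof -
  note Rm = Rm[OF i]
  show ?thesis
  proof (intro gorth.intro marg_gvec[OF i] gorth_axioms.intro)
    fix k assume "k \<in> {i}"
    then show "0 \<le> r k" "r k \<in> range av" using r_facts[OF i] by auto
  next
    have S: "{x \<in> space (E1 i). \<forall>k\<in>{i}. av (x k) \<le> r k} \<in> sets (E1 i)" by measurable
    show "AE x in mu1 i. \<forall>k\<in>{i}. av (x k) \<le> r k"
      by (subst AE_distr_iff[OF Rm S]) (rule AE_mp[OF AE_mu_r], intro AE_I2 impI, use i in auto)
  next
    fix \<alpha> :: "nat \<Rightarrow> 'k"
    assume h: "AE x in mu1 i. av (\<Sum>k\<in>{i}. \<alpha> k * x k) \<le> theta * Max (insert 0 ((\<lambda>k. av (\<alpha> k) * r k) ` {i}))"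
    have rnn: "0 \<le> r i" using r_facts(2)[OF i] .
    have Mx: "Max (insert 0 ((\<lambda>k. av (\<alpha> k) * r k) ` {i})) = av (\<alpha> i) * r i"
      using rnn by (simp add: max_def)
    show "Max (insert 0 ((\<lambda>k. av (\<alpha> k) * r k) ` {i})) = 0"
    proof (cases "\<alpha> i = 0")
      case True then show ?thesis using Mx by simp
    next
      case False
      then have ap: "0 < av (\<alpha> i)" by simp
      have h1: "AE x in mu1 i. av (\<alpha> i * x i) \<le> theta * (av (\<alpha> i) * r i)" using h Mx by simp
      have S1: "{x \<in> space (E1 i). av (\<alpha> i * x i) \<le> theta * (av (\<alpha> i) * r i)} \<in> sets (E1 i)" by measurable
      have S2: "{x \<in> space EE. av (\<alpha> i * x i) \<le> theta * (av (\<alpha> i) * r i)} \<in> sets EE" using i by measurable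
      have "AE x in mu. av (\<alpha> i * x i) \<le> theta * (av (\<alpha> i) * r i)"
        using h1 by (subst (asm) AE_distr_iff[OF Rm S1]) simp
      then have "AE \<omega> in M. av (\<alpha> i * X i \<omega>) \<le> theta * (av (\<alpha> i) * r i)"
        using i by (subst (asm) AE_distr_iff[OF Ym S2]) simp
      then have "AE \<omega> in M. av (X i \<omega>) \<le> theta * r i"
      proof (rule AE_mp, intro AE_I2 impI)
        fix \<omega> assume "av (\<alpha> i * X i \<omega>) \<le> theta * (av (\<alpha> i) * r i)"
        then have "av (\<alpha> i) * av (X i \<omega>) \<le> av (\<alpha> i) * (theta * r i)" by (simp add: av_mult algebra_simps)
        then show "av (X i \<omega>) \<le> theta * r i" using ap by (simp add: mult_le_cancel_left_pos)
      qed
      then have "r i \<le> theta * r i" by (rule r_facts(5)[OF i])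
      then have "(1 - theta) * r i \<le> 0" by (simp add: algebra_simps)
      moreover have "0 < 1 - theta" using theta(2) by simp
      ultimately have "r i \<le> 0" by (simp add: mult_le_0_iff)
      then have "r i = 0" using rnn by simp
      then show ?thesis using Mx by simp
    qed
  qed
qed

lemma marg_inv:
  assumes i: "i \<in> {..<n}" and y: "av y \<le> r i" and A: "A \<in> sets borel"
  shows "emeasure (Mi i) ((\<lambda>w. w + y) -` A) = emeasure (Mi i) A"
proof -
  interpret go: gorth av "{i}" "mu1 i" r by (rule marg_gorth[OF i])
  note Rm = Rm[OF i]
  let ?t = "\<lambda>k\<in>{i}. y"
  let ?T = "\<lambda>x. \<lambda>k\<in>{i}. x k + ?t k"
  have tP: "?t \<in> PiE {i} (\<lambda>_. UNIV)" by (simp add: restrict_PiE_iff)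
  have D: "distr (mu1 i) (E1 i) ?T = mu1 i" by (rule go.distr_shift[OF tP]) (use y in simp)
  have pim: "(\<lambda>x. x i) \<in> measurable (mu1 i) borel"
    by (subst measurable_cong_sets[of "mu1 i" "E1 i" borel borel]) (auto intro: measurable_component_singleton)
  have Mi1: "Mi i = distr (mu1 i) borel (\<lambda>x. x i)"
  proof -
    have "distr (mu1 i) borel (\<lambda>x. x i) = distr mu borel ((\<lambda>x. x i) \<circ> (\<lambda>x. \<lambda>k\<in>{i}. x k))"
      by (rule distr_distr[OF _ Rm]) (auto intro: measurable_component_singleton)
    also have "\<dots> = distr mu borel (\<lambda>x. x i)" by (simp add: o_def)
    finally show ?thesis using Mi_eq[OF i] by simp
  qed
  have Tm: "?T \<in> measurable (mu1 i) (E1 i)" by (rule go.shift_meas)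
  have yA: "(\<lambda>w. w + y) -` A \<in> sets borel" using measurable_sets[OF pvec.shift_k_meas[OF pv] A] by simp
  have SA: "{x \<in> space (E1 i). x i \<in> A} \<in> sets (E1 i)" using A by measurable
  have "emeasure (Mi i) ((\<lambda>w. w + y) -` A) = emeasure (mu1 i) ((\<lambda>x. x i) -` ((\<lambda>w. w + y) -` A) \<inter> space (mu1 i))"
    unfolding Mi1 by (rule emeasure_distr[OF pim yA])
  also have "(\<lambda>x. x i) -` ((\<lambda>w. w + y) -` A) \<inter> space (mu1 i) = ?T -` {x \<in> space (E1 i). x i \<in> A} \<inter> space (mu1 i)"
    by (auto simp: space_PiM)
  also have "emeasure (mu1 i) \<dots> = emeasure (distr (mu1 i) (E1 i) ?T) {x \<in> space (E1 i). x i \<in> A}"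
    by (rule emeasure_distr[OF Tm SA, symmetric])
  also have "\<dots> = emeasure (mu1 i) {x \<in> space (E1 i). x i \<in> A}" using D by simp
  also have "{x \<in> space (E1 i). x i \<in> A} = (\<lambda>x. x i) -` A \<inter> space (mu1 i)" by auto
  also have "emeasure (mu1 i) \<dots> = emeasure (Mi i) A"
    unfolding Mi1 by (rule emeasure_distr[OF pim A, symmetric])
  finally show ?thesis .
qed

end


context lfk begin

lemma Max_ereal: "finite N \<Longrightarrow> Max (insert 0 ((\<lambda>i. ereal (g i)) ` N)) = ereal (Max (insert 0 (g ` N)))"
proof -
  assume fin: "finite N"
  have "ereal (Max (insert 0 (g ` N))) = Max (ereal ` insert 0 (g ` N))"
    by (rule mono_Max_commute) (auto simp: mono_def fin)
  then show ?thesis by (simp add: image_image zero_ereal_def)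
qed

end

context gsetup begin

abbreviation "MA \<alpha> \<equiv> Max (insert 0 ((\<lambda>i. av (\<alpha> i) * r i) ` {..<n}))"

lemma MA_nonneg: "0 \<le> MA \<alpha>" by (intro Max_ge) auto

lemma MA_ge: "i \<in> {..<n} \<Longrightarrow> av (\<alpha> i) * r i \<le> MA \<alpha>" by (intro Max_ge) auto

lemma orth_rhs: "Max (insert 0 ((\<lambda>i. ereal (av (\<alpha> i)) * Linf_norm av M (X i)) ` {..<n})) = ereal (MA \<alpha>)"
proof -
  have "(\<lambda>i. ereal (av (\<alpha> i)) * Linf_norm av M (X i)) ` {..<n} = (\<lambda>i. ereal (av (\<alpha> i) * r i)) ` {..<n}"
    by (rule image_cong[OF refl]) (simp add: r_facts(1))
  then show ?thesis using Max_ereal[of "{..<n}" "\<lambda>i. av (\<alpha> i) * r i"] by simp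
qed

lemma W_meas: "(\<lambda>\<omega>. \<Sum>i\<in>{..<n}. \<alpha> i * X i \<omega>) \<in> borel_measurable M"
  using Xm by (intro measurable_sum_k measurable_cmult_k) auto

lemma AE_W: "(AE x in mu. av (\<Sum>i\<in>{..<n}. \<alpha> i * x i) \<le> c) \<longleftrightarrow> (AE \<omega> in M. av (\<Sum>i\<in>{..<n}. \<alpha> i * X i \<omega>) \<le> c)"
proof -
  have S: "{x \<in> space EE. av (\<Sum>i\<in>{..<n}. \<alpha> i * x i) \<le> c} \<in> sets EE" by measurable
  show ?thesis by (subst AE_distr_iff[OF Ym S]) simp
qed

lemma Linf_W_le: assumes h: "AE \<omega> in M. av (\<Sum>i\<in>{..<n}. \<alpha> i * X i \<omega>) \<le> c"
  shows "Linf_norm av M (\<lambda>\<omega>. \<Sum>i\<in>{..<n}. \<alpha> i * X i \<omega>) \<le> ereal c"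
proof -
  have m: "(\<lambda>\<omega>. ereal (av (\<Sum>i\<in>{..<n}. \<alpha> i * X i \<omega>))) \<in> borel_measurable M" using W_meas by measurable
  show ?thesis unfolding Linf_norm_def
    by (rule esssup_I[OF m], rule AE_mp[OF h], intro AE_I2 impI) simp
qed

lemma fwd_gorth: assumes O: "Linf_orthogonal av M X {..<n}" shows "gorth av {..<n} mu r"
proof (intro gorth.intro gv gorth_axioms.intro)
  fix i assume "i \<in> {..<n}"
  then show "0 \<le> r i" "r i \<in> range av" using r_facts by auto
next
  show "AE x in mu. \<forall>i\<in>{..<n}. av (x i) \<le> r i" by (rule AE_mu_r)
next
  fix \<alpha> :: "nat \<Rightarrow> 'k"
  assume h: "AE x in mu. av (\<Sum>i\<in>{..<n}. \<alpha> i * x i) \<le> theta * MA \<alpha>"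
  then have "Linf_norm av M (\<lambda>\<omega>. \<Sum>i\<in>{..<n}. \<alpha> i * X i \<omega>) \<le> ereal (theta * MA \<alpha>)"
    by (intro Linf_W_le) (simp add: AE_W)
  moreover have "Linf_norm av M (\<lambda>\<omega>. \<Sum>i\<in>{..<n}. \<alpha> i * X i \<omega>) = ereal (MA \<alpha>)"
    using O unfolding Linf_orthogonal_def orth_rhs by blast
  ultimately have "MA \<alpha> \<le> theta * MA \<alpha>" by simp
  then have "(1 - theta) * MA \<alpha> \<le> 0" by (simp add: algebra_simps)
  moreover have "0 < 1 - theta" using theta(2) by simp
  ultimately have a: "MA \<alpha> \<le> 0" by (simp only: mult_le_0_iff) linarith
  have b: "0 \<le> MA \<alpha>" by (rule MA_nonneg)
  from a b show "MA \<alpha> = 0" by linarith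
qed

lemma mm_sigma: "pair_sigma_finite mu (PiM {..<n} Mi)"
proof -
  interpret P: pvec av "{..<n}" Mi by (rule pv)
  interpret g: gvec av "{..<n}" mu by (rule gv)
  show ?thesis
    by (intro pair_sigma_finite.intro g.mu.sigma_finite_measure_axioms P.PS.sigma_finite_measure_axioms)
qed

lemma Mi_box_1: assumes i: "i \<in> {..<n}" shows "emeasure (Mi i) {w. av w \<le> r i} = 1"
proof -
  have S: "{w::'k. av w \<le> r i} \<in> sets borel" by measurable
  have "emeasure (Mi i) {w. av w \<le> r i} = emeasure M (X i -` {w. av w \<le> r i} \<inter> space M)"
    unfolding Mi_def using i Xm[OF i] by (simp add: emeasure_distr[OF _ S])
  also have "X i -` {w. av w \<le> r i} \<inter> space M = {\<omega> \<in> space M. av (X i \<omega>) \<le> r i}" by auto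
  also have "emeasure M \<dots> = 1"
  proof (rule PM.emeasure_eq_1_AE)
    show "{\<omega> \<in> space M. av (X i \<omega>) \<le> r i} \<in> sets M" using Xm[OF i] by measurable
    show "AE \<omega> in M. \<omega> \<in> {\<omega> \<in> space M. av (X i \<omega>) \<le> r i}"
      using r_facts(3)[OF i] by (rule AE_mp) (intro AE_I2 impI, simp)
  qed
  finally show ?thesis .
qed

lemma AE_nu_r: "AE z in PiM {..<n} Mi. \<forall>i\<in>{..<n}. av (z i) \<le> r i"
proof -
  interpret P: pvec av "{..<n}" Mi by (rule pv)
  let ?B = "PiE {..<n} (\<lambda>i. {w. av w \<le> r i})"
  have Bs: "\<And>i. i \<in> {..<n} \<Longrightarrow> {w::'k. av w \<le> r i} \<in> sets (Mi i)"
    using P.sets_Mi by (simp; measurable)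
  have "emeasure (PiM {..<n} Mi) ?B = (\<Prod>i\<in>{..<n}. emeasure (Mi i) {w. av w \<le> r i})"
    by (rule P.PS.emeasure_PiM) (use Bs in auto)
  also have "\<dots> = 1" by (simp add: Mi_box_1)
  finally have "measure (PiM {..<n} Mi) ?B = 1" by (simp add: measure_def)
  then have "AE z in PiM {..<n} Mi. z \<in> ?B" by (rule P.PS.AE_prob_1)
  then show ?thesis by (rule AE_mp) (intro AE_I2 impI, auto simp: PiE_iff)
qed

lemma fwd_prod: assumes O: "Linf_orthogonal av M X {..<n}" shows "mu = PiM {..<n} Mi"
proof -
  interpret go: gorth av "{..<n}" mu r by (rule fwd_gorth[OF O])
  interpret P: pvec av "{..<n}" Mi by (rule pv)
  interpret Q: pair_sigma_finite mu "PiM {..<n} Mi" by (rule mm_sigma)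
  let ?\<nu> = "PiM {..<n} Mi"
  show ?thesis
  proof (rule P.PS.PiM_eqI)
    show "finite {..<n}" by simp
    show "sets mu = sets ?\<nu>" using P.sets_nu by simp
    fix A assume A: "\<And>i. i \<in> {..<n} \<Longrightarrow> A i \<in> sets (Mi i)"
    have Ab: "A i \<in> sets borel" if "i \<in> {..<n}" for i using A[OF that] P.sets_Mi by simp
    have PA: "PiE {..<n} A \<in> sets EE" using Ab by (intro sets_PiM_I_finite) auto
    let ?S = "{p \<in> space (mu \<Otimes>\<^sub>M ?\<nu>). (\<lambda>i\<in>{..<n}. fst p i + snd p i) \<in> PiE {..<n} A}"
    have spQ: "space (mu \<Otimes>\<^sub>M ?\<nu>) = PiE {..<n} (\<lambda>_. UNIV) \<times> PiE {..<n} (\<lambda>_. UNIV)"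
      using P.space_nu by (simp add: space_pair_measure space_PiM)
    have Ssets: "?S \<in> sets (mu \<Otimes>\<^sub>M ?\<nu>)"
    proof -
      have "(\<lambda>p. \<lambda>i\<in>{..<n}. fst p i + snd p i) \<in> measurable (EE \<Otimes>\<^sub>M EE) EE" by measurable
      then have m: "(\<lambda>p. \<lambda>i\<in>{..<n}. fst p i + snd p i) \<in> measurable (mu \<Otimes>\<^sub>M ?\<nu>) EE"
        by (subst measurable_cong_sets[OF sets_pair_measure_cong[OF sets_mu P.sets_nu] refl])
      have "(\<lambda>p. \<lambda>i\<in>{..<n}. fst p i + snd p i) -` PiE {..<n} A \<inter> space (mu \<Otimes>\<^sub>M ?\<nu>) \<in> sets (mu \<Otimes>\<^sub>M ?\<nu>)"
        by (rule measurable_sets[OF m PA])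
      then show ?thesis by (simp add: Int_def conj_commute vimage_def)
    qed
    have "emeasure (mu \<Otimes>\<^sub>M ?\<nu>) ?S = (\<integral>\<^sup>+ z. emeasure mu ((\<lambda>x. (x, z)) -` ?S) \<partial>?\<nu>)"
      by (rule Q.emeasure_pair_measure_alt2[OF Ssets])
    also have "\<dots> = (\<integral>\<^sup>+ z. emeasure mu (PiE {..<n} A) \<partial>?\<nu>)"
    proof (rule nn_integral_cong_AE)
      show "AE z in ?\<nu>. emeasure mu ((\<lambda>x. (x, z)) -` ?S) = emeasure mu (PiE {..<n} A)"
        using AE_nu_r
      proof (rule AE_mp, intro AE_I2 impI)
        fix z assume z: "z \<in> space ?\<nu>" and zr: "\<forall>i\<in>{..<n}. av (z i) \<le> r i"
        have zP: "z \<in> PiE {..<n} (\<lambda>_. UNIV)" using z by (simp add: P.space_nu)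
        have spmu: "space mu = PiE {..<n} (\<lambda>_. UNIV)" by (simp add: space_PiM)
        have "(\<lambda>x. (x, z)) -` ?S = (\<lambda>x. \<lambda>i\<in>{..<n}. x i + z i) -` PiE {..<n} A \<inter> space mu"
        proof (intro set_eqI iffI)
          fix x assume "x \<in> (\<lambda>x. (x, z)) -` ?S"
          then have "(x, z) \<in> space (mu \<Otimes>\<^sub>M ?\<nu>)" "(\<lambda>i\<in>{..<n}. x i + z i) \<in> PiE {..<n} A" by simp_all
          then show "x \<in> (\<lambda>x. \<lambda>i\<in>{..<n}. x i + z i) -` PiE {..<n} A \<inter> space mu"
            unfolding spQ spmu by simp
        next
          fix x assume "x \<in> (\<lambda>x. \<lambda>i\<in>{..<n}. x i + z i) -` PiE {..<n} A \<inter> space mu"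
          then have "x \<in> PiE {..<n} (\<lambda>_. UNIV)" "(\<lambda>i\<in>{..<n}. x i + z i) \<in> PiE {..<n} A"
            unfolding spmu by simp_all
          then show "x \<in> (\<lambda>x. (x, z)) -` ?S" using zP unfolding spQ by simp
        qed
        also have "emeasure mu \<dots> = emeasure (distr mu EE (\<lambda>x. \<lambda>i\<in>{..<n}. x i + z i)) (PiE {..<n} A)"
          by (rule emeasure_distr[OF go.shift_meas PA, symmetric])
        also have "\<dots> = emeasure mu (PiE {..<n} A)" using go.distr_shift[OF zP zr] by simp
        finally show "emeasure mu ((\<lambda>x. (x, z)) -` ?S) = emeasure mu (PiE {..<n} A)" .
      qed
    qed
    also have "\<dots> = emeasure mu (PiE {..<n} A)"
      by (simp add: nn_integral_const P.PS.emeasure_space_1)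
    finally have a: "emeasure (mu \<Otimes>\<^sub>M ?\<nu>) ?S = emeasure mu (PiE {..<n} A)" .
    have "emeasure (mu \<Otimes>\<^sub>M ?\<nu>) ?S = (\<integral>\<^sup>+ x. emeasure ?\<nu> (Pair x -` ?S) \<partial>mu)"
      by (rule P.PS.emeasure_pair_measure_alt[OF Ssets])
    also have "\<dots> = (\<integral>\<^sup>+ x. (\<Prod>i\<in>{..<n}. emeasure (Mi i) (A i)) \<partial>mu)"
    proof (rule nn_integral_cong_AE)
      show "AE x in mu. emeasure ?\<nu> (Pair x -` ?S) = (\<Prod>i\<in>{..<n}. emeasure (Mi i) (A i))"
        using AE_mu_r
      proof (rule AE_mp, intro AE_I2 impI)
        fix x assume x: "x \<in> space mu" and xr: "\<forall>i\<in>{..<n}. av (x i) \<le> r i"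
        have xP: "x \<in> PiE {..<n} (\<lambda>_. UNIV)" using x by (simp add: space_PiM)
        have "Pair x -` ?S = PiE {..<n} (\<lambda>i. (\<lambda>w. w + x i) -` A i)"
        proof (intro set_eqI iffI)
          fix z assume "z \<in> Pair x -` ?S"
          then have zP: "z \<in> PiE {..<n} (\<lambda>_. UNIV)" and zA: "(\<lambda>i\<in>{..<n}. x i + z i) \<in> PiE {..<n} A"
            by (auto simp: spQ)
          have "z i \<in> (\<lambda>w. w + x i) -` A i" if "i \<in> {..<n}" for i
            using zA that by (auto simp: restrict_PiE_iff add.commute[of "z i"])
          then show "z \<in> PiE {..<n} (\<lambda>i. (\<lambda>w. w + x i) -` A i)" using zP by (auto simp: PiE_iff)
        next
          fix z assume z: "z \<in> PiE {..<n} (\<lambda>i. (\<lambda>w. w + x i) -` A i)"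
          then have zP: "z \<in> PiE {..<n} (\<lambda>_. UNIV)" by (auto simp: PiE_iff)
          have "x i + z i \<in> A i" if "i \<in> {..<n}" for i
            using z that by (simp add: PiE_iff add.commute[of "x i" "z i"])
          then have "(\<lambda>i\<in>{..<n}. x i + z i) \<in> PiE {..<n} A" by (simp add: restrict_PiE_iff)
          then show "z \<in> Pair x -` ?S" using xP zP by (simp add: spQ)
        qed
        also have "emeasure ?\<nu> \<dots> = (\<Prod>i\<in>{..<n}. emeasure (Mi i) ((\<lambda>w. w + x i) -` A i))"
        proof (rule P.PS.emeasure_PiM)
          show "finite {..<n}" by simp
          fix i assume i: "i \<in> {..<n}"
          have "(\<lambda>w. w + x i) -` A i \<inter> space borel \<in> sets borel"
            using Ab[OF i] by (intro measurable_sets[OF P.shift_k_meas])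
          then show "(\<lambda>w. w + x i) -` A i \<in> sets (Mi i)" using P.sets_Mi by simp
        qed
        also have "\<dots> = (\<Prod>i\<in>{..<n}. emeasure (Mi i) (A i))"
          by (rule prod.cong[OF refl]) (rule marg_inv, auto simp: xr Ab)
        finally show "emeasure ?\<nu> (Pair x -` ?S) = (\<Prod>i\<in>{..<n}. emeasure (Mi i) (A i))" .
      qed
    qed
    also have "\<dots> = (\<Prod>i\<in>{..<n}. emeasure (Mi i) (A i))"
      using go.mu.emeasure_space_1 by (simp add: nn_integral_const)
    finally have b: "emeasure (mu \<Otimes>\<^sub>M ?\<nu>) ?S = (\<Prod>i\<in>{..<n}. emeasure (Mi i) (A i))" .
    show "emeasure mu (PiE {..<n} A) = (\<Prod>i\<in>{..<n}. emeasure (Mi i) (A i))" using a b by simp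
  qed
qed

lemma indep_iff_mu: "PM.indep_vars (\<lambda>_. borel) X {..<n} \<longleftrightarrow> mu = PiM {..<n} Mi"
proof (cases "n = 0")
  case True
  interpret P: pvec av "{..<n}" Mi by (rule pv)
  interpret g: gvec av "{..<n}" mu by (rule gv)
  have L: "PM.indep_vars (\<lambda>_. borel) X {..<n}" using True by (simp add: PM.indep_vars_def PM.indep_sets_def)
  have R: "mu = PiM {..<n} Mi"
  proof (rule P.PS.PiM_eqI)
    show "finite {..<n}" by simp
    show "sets mu = sets (PiM {..<n} Mi)" using P.sets_nu by simp
    fix A :: "nat \<Rightarrow> 'k set"
    have "PiE {..<n} A = space mu" using True by (simp add: space_PiM)
    then show "emeasure mu (PiE {..<n} A) = (\<Prod>i\<in>{..<n}. emeasure (Mi i) (A i))"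
      using True g.mu.emeasure_space_1 by simp
  qed
  show ?thesis using L R by simp
next
  case False
  then have ne: "{..<n} \<noteq> {}" by auto
  have "PM.indep_vars (\<lambda>_. borel) X {..<n} \<longleftrightarrow>
      distr M (PiM {..<n} (\<lambda>_. borel)) (\<lambda>x. \<lambda>i\<in>{..<n}. X i x) = PiM {..<n} (\<lambda>i. distr M borel (X i))"
    by (rule PM.indep_vars_iff_distr_eq_PiM'[OF ne]) (rule Xm)
  also have "PiM {..<n} (\<lambda>i. distr M borel (X i)) = PiM {..<n} Mi"
    by (rule PiM_cong) (auto simp: Mi_def)
  finally show ?thesis .
qed

lemma bwd: assumes mP: "mu = PiM {..<n} Mi" shows "Linf_orthogonal av M X {..<n}"
proof -
  interpret P: pvec av "{..<n}" Mi by (rule pv)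
  interpret g: gvec av "{..<n}" mu by (rule gv)
  have shift: "distr mu EE (\<lambda>x. \<lambda>i\<in>{..<n}. x i + (if i = j then y else 0)) = mu"
    if j: "j \<in> {..<n}" and y: "av y \<le> r j" for j y
  proof -
    have "distr (PiM {..<n} Mi) EE (\<lambda>x. \<lambda>i\<in>{..<n}. x i + (if i = j then y else 0)) = PiM {..<n} Mi"
    proof (rule P.prod_shift)
      fix i and A :: "'k set" assume i: "i \<in> {..<n}" and A: "A \<in> sets borel"
      show "emeasure (Mi i) ((\<lambda>w. w + (if i = j then y else 0)) -` A) = emeasure (Mi i) A"
        using marg_inv[OF j y A] by (cases "i = j") auto
    qed
    then show ?thesis using mP by simp
  qed
  show ?thesis unfolding Linf_orthogonal_def orth_rhs
  proof (intro conjI ballI allI)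
    fix i assume i: "i \<in> {..<n}"
    show "X i \<in> borel_measurable M" by (rule Xm[OF i])
    show "Linf_norm av M (X i) < \<infinity>" using r_facts(1)[OF i] by simp
  next
    fix \<alpha> :: "nat \<Rightarrow> 'k"
    let ?W = "\<lambda>\<omega>. \<Sum>i\<in>{..<n}. \<alpha> i * X i \<omega>"
    have AEle: "AE \<omega> in M. av (?W \<omega>) \<le> MA \<alpha>"
      using AE_M_r
    proof (rule AE_mp, intro AE_I2 impI)
      fix \<omega> assume h: "\<forall>i\<in>{..<n}. av (X i \<omega>) \<le> r i"
      show "av (?W \<omega>) \<le> MA \<alpha>"
      proof (rule av_sum_le)
        fix i assume i: "i \<in> {..<n}"
        have "av (\<alpha> i * X i \<omega>) = av (\<alpha> i) * av (X i \<omega>)" by (rule av_mult)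
        also have "\<dots> \<le> av (\<alpha> i) * r i" using h i by (intro mult_left_mono) auto
        also have "\<dots> \<le> MA \<alpha>" by (rule MA_ge[OF i])
        finally show "av (\<alpha> i * X i \<omega>) \<le> MA \<alpha>" .
      qed (auto intro: MA_nonneg)
    qed
    have le: "Linf_norm av M ?W \<le> ereal (MA \<alpha>)" by (rule Linf_W_le[OF AEle])
    have lt: "AE \<omega> in M. av (?W \<omega>) < MA \<alpha> + 1" using AEle by (rule AE_mp) (intro AE_I2 impI, simp)
    note F = esssup_facts[OF probM W_meas lt]
    define v where "v = real_of_ereal (Linf_norm av M ?W)"
    have Lv: "Linf_norm av M ?W = ereal v" using F(1) unfolding v_def Linf_norm_def by simp
    have v0: "0 \<le> v" using F(2) unfolding v_def Linf_norm_def by simp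
    have AEv: "AE \<omega> in M. av (?W \<omega>) \<le> v" using F(3) unfolding v_def Linf_norm_def by simp
    have "MA \<alpha> \<le> v"
    proof (rule ccontr)
      assume "\<not> MA \<alpha> \<le> v"
      then have vlt: "v < MA \<alpha>" by linarith
      then have "MA \<alpha> \<noteq> 0" using v0 by linarith
      moreover have "MA \<alpha> \<in> insert 0 ((\<lambda>i. av (\<alpha> i) * r i) ` {..<n})" by (intro Max_in) auto
      ultimately obtain j where j: "j \<in> {..<n}" "MA \<alpha> = av (\<alpha> j) * r j" by auto
      obtain y where y: "av y = r j" using r_facts(4)[OF j(1)] by (metis rangeE)
      let ?T = "\<lambda>x. \<lambda>i\<in>{..<n}. x i + (if i = j then y else 0)"
      have "?T \<in> measurable EE EE" by measurable
      then have Tm: "?T \<in> measurable mu EE" by (subst measurable_cong_sets[OF sets_mu refl])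
      have AE1: "AE x in mu. av (\<Sum>i\<in>{..<n}. \<alpha> i * x i) \<le> v" using AEv by (simp add: AE_W)
      have S: "{x \<in> space EE. av (\<Sum>i\<in>{..<n}. \<alpha> i * x i) \<le> v} \<in> sets EE" by measurable
      have "AE x in distr mu EE ?T. av (\<Sum>i\<in>{..<n}. \<alpha> i * x i) \<le> v"
      proof -
        have eq: "distr mu EE ?T = mu" using shift[OF j(1), of y] y by simp
        show ?thesis by (subst eq) (rule AE1)
      qed
      then have AE2: "AE x in mu. av (\<Sum>i\<in>{..<n}. \<alpha> i * ?T x i) \<le> v"
        by (subst (asm) AE_distr_iff[OF Tm S])
      have "AE x in mu. av (\<Sum>i\<in>{..<n}. \<alpha> i * x i) \<le> v \<and> av (\<Sum>i\<in>{..<n}. \<alpha> i * ?T x i) \<le> v"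
        using AE1 AE2 by (rule AE_conjI)
      then obtain Z where Z: "Z \<subseteq> {x \<in> space mu. av (\<Sum>i\<in>{..<n}. \<alpha> i * x i) \<le> v \<and> av (\<Sum>i\<in>{..<n}. \<alpha> i * ?T x i) \<le> v}"
        "g.mu.prob Z = 1" by (rule g.mu.AE_E_prob)
      then have "Z \<noteq> {}" by auto
      then obtain x where x: "x \<in> space mu" "av (\<Sum>i\<in>{..<n}. \<alpha> i * x i) \<le> v" "av (\<Sum>i\<in>{..<n}. \<alpha> i * ?T x i) \<le> v"
        using Z(1) by blast
      have "(\<Sum>i\<in>{..<n}. \<alpha> i * ?T x i) = (\<Sum>i\<in>{..<n}. \<alpha> i * x i + (if i = j then \<alpha> j * y else 0))"
        by (rule sum.cong[OF refl]) (auto simp: algebra_simps)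
      also have "\<dots> = (\<Sum>i\<in>{..<n}. \<alpha> i * x i) + \<alpha> j * y"
        using j(1) by (simp add: sum.distrib)
      finally have eq: "\<alpha> j * y = (\<Sum>i\<in>{..<n}. \<alpha> i * ?T x i) - (\<Sum>i\<in>{..<n}. \<alpha> i * x i)" by simp
      have "av (\<alpha> j * y) \<le> max (av (\<Sum>i\<in>{..<n}. \<alpha> i * ?T x i)) (av (\<Sum>i\<in>{..<n}. \<alpha> i * x i))"
        unfolding eq by (rule av_diff_ultra)
      also have "\<dots> \<le> v" using x by simp
      finally have "av (\<alpha> j * y) \<le> v" .
      moreover have "av (\<alpha> j * y) = MA \<alpha>" using j(2) y by (simp add: av_mult)
      ultimately show False using vlt by linarith
    qed
    then have "ereal (MA \<alpha>) \<le> Linf_norm av M ?W" using Lv by simp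
    then show "Linf_norm av M ?W = ereal (MA \<alpha>)" using le by (rule antisym[rotated])
  qed
qed

end


context lfk begin

lemma part2:
  assumes P: "prob_space M" and I: "prob_space.indep_vars M (\<lambda>_. borel) X {..<n}"
    and G: "\<forall>i<n. K_gaussian_scalar av M (X i)"
  shows "K_gaussian_vec av n M (\<lambda>\<omega>. \<lambda>i\<in>{..<n}. X i \<omega>)"
proof -
  interpret PM: prob_space M by (rule P)
  let ?N = "{..<n}"
  let ?E = "PiM ?N (\<lambda>_. borel :: 'k measure)"
  let ?Y = "\<lambda>\<omega>. \<lambda>i\<in>?N. X i \<omega>"
  define Mi where "Mi i = distr M borel (if i \<in> ?N then X i else (\<lambda>_. 0))" for i
  have Xm: "X i \<in> borel_measurable M" if "i \<in> ?N" for i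
    using G that unfolding K_gaussian_scalar_def K_gaussian_def by auto
  have Mi_prob: "prob_space (Mi i)" for i
    unfolding Mi_def using Xm by (intro PM.prob_space_distr) auto
  have pv: "pvec av ?N Mi"
    by (intro pvec.intro pvec_axioms.intro lfk_axioms Mi_prob) (auto simp: Mi_def)
  interpret Pv: pvec av ?N Mi by (rule pv)
  have Ym: "?Y \<in> measurable M ?E" using Xm by (intro measurable_restrict) auto
  have mu_eq: "distr M ?E ?Y = PiM ?N Mi"
  proof (cases "n = 0")
    case True
    interpret pd: prob_space "distr M ?E ?Y" by (rule PM.prob_space_distr[OF Ym])
    show ?thesis
    proof (rule Pv.PS.PiM_eqI)
      show "finite ?N" by simp
      show "sets (distr M ?E ?Y) = sets (PiM ?N Mi)" using Pv.sets_nu by simp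
      fix A :: "nat \<Rightarrow> 'k set"
      have "PiE ?N A = space (distr M ?E ?Y)" using True by (simp add: space_PiM)
      then show "emeasure (distr M ?E ?Y) (PiE ?N A) = (\<Prod>i\<in>?N. emeasure (Mi i) (A i))"
        using True pd.emeasure_space_1 by simp
    qed
  next
    case False
    then have ne: "?N \<noteq> {}" by auto
    have "distr M ?E ?Y = PiM ?N (\<lambda>i. distr M borel (X i))"
      using PM.indep_vars_iff_distr_eq_PiM'[OF ne, of X "\<lambda>_. borel"] Xm I by simp
    also have "\<dots> = PiM ?N Mi" by (rule PiM_cong) (auto simp: Mi_def)
    finally show ?thesis .
  qed
  show ?thesis
    unfolding K_gaussian_vec_def K_gaussian_def Let_def
  proof (intro conjI allI impI)
    show "?Y \<in> measurable M ?E" by (rule Ym)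
    fix a11 a12 a21 a22 :: 'k assume orth: "orthonormal_pair av (a11, a12) (a21, a22)"
    have Gi: "distr (Mi i \<Otimes>\<^sub>M Mi i) (borel \<Otimes>\<^sub>M borel) (\<lambda>(x1, x2). (a11 * x1 + a12 * x2, a21 * x1 + a22 * x2)) = Mi i \<Otimes>\<^sub>M Mi i"
      if i: "i \<in> ?N" for i
    proof -
      have "K_gaussian_scalar av M (X i)" using G i by simp
      then have "distr (distr M borel (X i) \<Otimes>\<^sub>M distr M borel (X i)) (borel \<Otimes>\<^sub>M borel)
          (\<lambda>(x1, x2). (a11 * x1 + a12 * x2, a21 * x1 + a22 * x2)) = distr M borel (X i) \<Otimes>\<^sub>M distr M borel (X i)"
        using orth unfolding K_gaussian_scalar_def K_gaussian_def Let_def by blast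
      then show ?thesis using i by (simp add: Mi_def)
    qed
    have fun_eq: "(\<lambda>(x1, x2). ((\<lambda>y z. \<lambda>i\<in>?N. y i + z i) ((\<lambda>a y. \<lambda>i\<in>?N. a * y i) a11 x1) ((\<lambda>a y. \<lambda>i\<in>?N. a * y i) a12 x2),
                (\<lambda>y z. \<lambda>i\<in>?N. y i + z i) ((\<lambda>a y. \<lambda>i\<in>?N. a * y i) a21 x1) ((\<lambda>a y. \<lambda>i\<in>?N. a * y i) a22 x2)))
        = (\<lambda>(x1, x2). (\<lambda>i\<in>?N. a11 * x1 i + a12 * x2 i, \<lambda>i\<in>?N. a21 * x1 i + a22 * x2 i))"
      by (auto simp: fun_eq_iff)
    show "distr (distr M ?E ?Y \<Otimes>\<^sub>M distr M ?E ?Y) (?E \<Otimes>\<^sub>M ?E)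
        (\<lambda>(x1, x2). ((\<lambda>y z. \<lambda>i\<in>?N. y i + z i) ((\<lambda>a y. \<lambda>i\<in>?N. a * y i) a11 x1) ((\<lambda>a y. \<lambda>i\<in>?N. a * y i) a12 x2),
                (\<lambda>y z. \<lambda>i\<in>?N. y i + z i) ((\<lambda>a y. \<lambda>i\<in>?N. a * y i) a21 x1) ((\<lambda>a y. \<lambda>i\<in>?N. a * y i) a22 x2)))
        = distr M ?E ?Y \<Otimes>\<^sub>M distr M ?E ?Y"
      unfolding fun_eq mu_eq by (rule Pv.prod_gauss[OF Gi])
  qed
qed

end

theorem theorem4p8:
  fixes av :: "'k::{field,metric_space} \<Rightarrow> real" and M :: "'a measure" and n :: nat
  assumes "local_field_abs av" and "prob_space M"
  shows "(\<forall>X :: nat \<Rightarrow> 'a \<Rightarrow> 'k.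
            K_gaussian_vec av n M (\<lambda>\<omega>. \<lambda>i\<in>{..<n}. X i \<omega>) \<longrightarrow>
            (Linf_orthogonal av M X {..<n} \<longleftrightarrow> prob_space.indep_vars M (\<lambda>_. borel) X {..<n}))
       \<and> (\<forall>X :: nat \<Rightarrow> 'a \<Rightarrow> 'k.
            prob_space.indep_vars M (\<lambda>_. borel) X {..<n} \<and> (\<forall>i<n. K_gaussian_scalar av M (X i)) \<longrightarrow>
            K_gaussian_vec av n M (\<lambda>\<omega>. \<lambda>i\<in>{..<n}. X i \<omega>))"
proof -
  interpret lfk av by (unfold lfk_def) (rule assms(1))
  show ?thesis
  proof (intro conjI allI impI)
    fix X :: "nat \<Rightarrow> 'a \<Rightarrow> 'k"
    assume KG: "K_gaussian_vec av n M (\<lambda>\<omega>. \<lambda>i\<in>{..<n}. X i \<omega>)"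
    interpret gs: gsetup av M n X by (intro gsetup.intro gsetup_axioms.intro lfk_axioms assms(2) KG)
    show "Linf_orthogonal av M X {..<n} \<longleftrightarrow> prob_space.indep_vars M (\<lambda>_. borel) X {..<n}"
      using gs.fwd_prod gs.bwd gs.indep_iff_mu by blast
  next
    fix X :: "nat \<Rightarrow> 'a \<Rightarrow> 'k"
    assume "prob_space.indep_vars M (\<lambda>_. borel) X {..<n} \<and> (\<forall>i<n. K_gaussian_scalar av M (X i))"
    then show "K_gaussian_vec av n M (\<lambda>\<omega>. \<lambda>i\<in>{..<n}. X i \<omega>)"
      using part2[OF assms(2)] by blast
  qed
qed


end
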